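(* Assume (G0)–(G4). Let $h_0(X):=|X-nc|_\Sigma^2$ and, for $\theta>0$, $h_\theta(X):=\exp\{n^{-1}\theta h_0(X)\}$. Then for every $\delta\le\min\{\delta_*,\delta'_*(d)\}$ and every $X\in\widetilde B_{n,\delta}(c)$ with $|X-nc|_\Sigma\ge K_*\sqrt{nd}$, $$\mathcal A_n^\delta h_0(X)\le-\alpha_1h_0(X),$$ and, if in addition $n\ge n_*$, $$\mathcal A_n^\delta h_\theta(X)\le-\tfrac12n^{-1}\alpha_1\theta h_0(X)h_\theta(X)\quad\text{for all }0<\theta\le\theta_1.$$
   Context: Fix integers $d\ge1$, $n\ge d^4$ (standing assumption). Let $\mathcal J\subset\mathbb Z^d$ be finite, $g^J:\mathbb R^d\to[0,\infty)$ for $J\in\mathcal J$, $F(\xi):=\sum_JJg^J(\xi)$, $\sigma^2(x):=\sum_JJJ^Tg^J(x)$. Fix $c\in\mathbb R^d$, $\delta_0>0$, $B_{\delta_0}(c):=\{x:|x-c|\le\delta_0\}$. Assumptions: (G0) $F(c)=0$; (G1) all eigenvalues of $A:=DF(c)$ have negative real part; (G2) each $g^J$ is $C^2$ on $B_{\delta_0}(c)$; (G3) there is $\varepsilon_0>0$ with $\inf_{B_{\delta_0}(c)}g^J\ge\varepsilon_0g^J(c)>0$ for all $J$; (G4) each $e^{(j)}$ is a finite sum of elements of $\mathcal J$. Let $\sigma^2:=\sigma^2(c)$, $\Sigma$ the positive definite symmetric solution of $A\Sigma+\Sigma A^T+\sigma^2=0$, $|Y|_\Sigma:=(Y^T\Sigma^{-1}Y)^{1/2}$,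 $\widetilde B_{n,\delta}(c):=\{X\in\mathbb Z^d:|X-nc|_\Sigma\le n\delta\}$. The restricted process $X_n^\delta$ jumps $X\to X+J$ at rate $ng^J_\delta(n^{-1}X)$, where $g^J_\delta(n^{-1}X)=g^J(n^{-1}X)$ if $X,X+J\in\widetilde B_{n,\delta}(c)$ and $0$ otherwise; its generator is $\mathcal A_n^\delta h(X):=n\sum_Jg^J_\delta(n^{-1}X)\{h(X+J)-h(X)\}$. Notation: for symmetric positive definite $M$, $\lambda_{\min}(M),\lambda_{\max}(M)$ are its extreme eigenvalues and $\rho(M):=\lambda_{\max}(M)/\lambda_{\min}(M)$. $L_0:=\max_J\sup_{B_{\delta_0}(c)}g^J/g^J(c)$, $L_2:=\max_J\sup_{B_{\delta_0}(c)}\|D^2g^J\|/g^J(c)$; $\Lambda:=\mathrm{Tr}(\sigma^2)$, $\bar\Lambda:=\Lambda/d$; $J^\Sigma_{\max}:=\max_J|\Sigma^{-1/2}J|$; $\sigma^2_\Sigma:=\Sigma^{-1/2}\sigma^2\Sigma^{-1/2}$; $\alpha_1:=\tfrac12\lambda_{\min}(\sigma^2_\Sigma)$. Constants: $K_*:=(2L_0\mathrm{Tr}(\sigma^2_\Sigma)/(d\alpha_1))^{1/2}$; $\delta_*:=\delta_0/\sqrt{\lambda_{\max}(\Sigma)}$; $\delta'_*(d):=\alpha_1\sqrt{\lambda_{\min}(\Sigma)}/(4d\bar\Lambda L_2\lambda_{\max}(\Sigma))$ (interpreted as $+\infty$ if $L_2=0$); $\theta_1:=d^{-1}\min\{1/(3d^{-1}J^\Sigma_{\max}\delta_*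 ),\,1/(64L_0\rho(\sigma^2)\rho(\Sigma)),\,1/(4(d^{-1}J^\Sigma_{\max})^2)\}$; $n_*:=(d^{-1}J^\Sigma_{\max}/\delta_* )^{4/3}$. *)

theory Defs
  imports "HOL-Analysis.Analysis"
begin

definition lattice_pt :: "real^'d \<Rightarrow> bool" where
  "lattice_pt X \<longleftrightarrow> (\<forall>i. X $ i \<in> \<int>)"

definition sym_mat :: "real^'d^'d \<Rightarrow> bool" where
  "sym_mat M \<longleftrightarrow> transpose M = M"

definition posdef :: "real^'d^'d \<Rightarrow> bool" where
  "posdef M \<longleftrightarrow> sym_mat M \<and> (\<forall>v. v \<noteq> 0 \<longrightarrow> v \<bullet> (M *v v) > 0)"

definition real_eigenvalues :: "real^'d^'d \<Rightarrow> real set" where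
  "real_eigenvalues M = {l. \<exists>v. v \<noteq> 0 \<and> M *v v = l *\<^sub>R v}"

definition lam_min :: "real^'d^'d \<Rightarrow> real" where
  "lam_min M = Min (real_eigenvalues M)"

definition lam_max :: "real^'d^'d \<Rightarrow> real" where
  "lam_max M = Max (real_eigenvalues M)"

definition cond_num :: "real^'d^'d \<Rightarrow> real" where
  "cond_num M = lam_max M / lam_min M"

definition hurwitz :: "real^'d^'d \<Rightarrow> bool" where
  "hurwitz A \<longleftrightarrow> (\<forall>(l::complex) (v::complex^'d). v \<noteq> 0 \<and>
      (\<chi> i j. complex_of_real (A $ i $ j)) *v v = l *s v \<longrightarrow> Re l < 0)"

definition psd_sqrt :: "real^'d^'d \<Rightarrow> real^'d^'d" where
  "psd_sqrt M = (THE R. posdef R \<and> R ** R = M)"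

definition snorm :: "real^'d^'d \<Rightarrow> real^'d \<Rightarrow> real" where
  "snorm S Y = sqrt (Y \<bullet> (matrix_inv S *v Y))"

definition tball :: "real^'d^'d \<Rightarrow> nat \<Rightarrow> real \<Rightarrow> real^'d \<Rightarrow> (real^'d) set" where
  "tball S n \<delta> c = {X. lattice_pt X \<and> snorm S (X - real n *\<^sub>R c) \<le> real n * \<delta>}"

definition g_restr :: "(real^'d \<Rightarrow> real^'d \<Rightarrow> real) \<Rightarrow> real^'d^'d \<Rightarrow> nat \<Rightarrow> real
     \<Rightarrow> real^'d \<Rightarrow> real^'d \<Rightarrow> real^'d \<Rightarrow> real" where
  "g_restr g S n \<delta> c J X =
     (if X \<in> tball S n \<delta> c \<and> X + J \<in> tball S n \<delta> c then g J (inverse (real n) *\<^sub>R X) else 0)"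

definition gen :: "(real^'d) set \<Rightarrow> (real^'d \<Rightarrow> real^'d \<Rightarrow> real) \<Rightarrow> real^'d^'d \<Rightarrow> nat \<Rightarrow> real
     \<Rightarrow> real^'d \<Rightarrow> (real^'d \<Rightarrow> real) \<Rightarrow> real^'d \<Rightarrow> real" where
  "gen JJ g S n \<delta> c h X =
     real n * (\<Sum>J\<in>JJ. g_restr g S n \<delta> c J X * (h (X + J) - h X))"

definition sigma2 :: "(real^'d) set \<Rightarrow> (real^'d \<Rightarrow> real^'d \<Rightarrow> real) \<Rightarrow> real^'d \<Rightarrow> real^'d^'d" where
  "sigma2 JJ g x = (\<chi> i k. \<Sum>J\<in>JJ. J $ i * J $ k * g J x)"

definition drift :: "(real^'d) set \<Rightarrow> (real^'d \<Rightarrow> real^'d \<Rightarrow> real) \<Rightarrow> real^'d \<Rightarrow> real^'d" where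
  "drift JJ g x = (\<Sum>J\<in>JJ. g J x *\<^sub>R J)"

end

theory Submission
  imports Defs
begin

lemma sym_dot:
  fixes M :: "real^'d^'d"
  assumes "sym_mat M"
  shows "(M *v x) \<bullet> y = x \<bullet> (M *v y)"
proof -
  have "M *v x = x v* transpose M" by simp
  also have "\<dots> = x v* M" using assms by (simp add: sym_mat_def)
  finally show ?thesis by (simp add: dot_lmul_matrix)
qed

lemma quad_arg:
  fixes a b :: real
  assumes "\<And>t. 2*t*a \<le> t^2 * b" and "a \<ge> 0"
  shows "a = 0"
proof (rule ccontr)
  assume "a \<noteq> 0" hence a: "a > 0" using assms(2) by simp
  define t where "t = a / (\<bar>b\<bar> + 1)"
  have t: "t > 0" using a by (simp add: t_def)
  have "2*t*a \<le> t^2*b" by (rule assms(1))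
  also have "\<dots> \<le> t^2 * \<bar>b\<bar>" by (simp add: mult_left_mono)
  finally have "2*a \<le> t*\<bar>b\<bar>" using t by (simp add: power2_eq_square)
  also have "t*\<bar>b\<bar> < a" using a unfolding t_def
    by (simp add: field_simps)
  finally show False using a by simp
qed

lemma aux_ineq: "(\<mu>::real) + 2*t*a + t^2*b \<le> \<mu>*(1+t^2*a) \<Longrightarrow> 2*t*a \<le> t^2*(\<mu>*a - b)"
  by (simp add: algebra_simps)

lemma spectral_sub:
  fixes M :: "real^'d^'d"
  assumes sym: "sym_mat M"
  shows "subspace V \<Longrightarrow> (\<forall>v\<in>V. M *v v \<in> V) \<Longrightarrow>
    \<exists>B. finite B \<and> B \<subseteq> V \<and> (\<forall>e\<in>B. norm e = 1 \<and> M *v e = (e \<bullet> (M *v e)) *\<^sub>R e)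
       \<and> pairwise orthogonal B \<and> span B = V"
proof (induction "dim V" arbitrary: V rule: less_induct)
  case less
  show ?case
  proof (cases "V = {0}")
    case True
    then show ?thesis by (intro exI[of _ "{}"]) auto
  next
    case False
    then obtain v where v: "v \<in> V" "v \<noteq> 0" using less.prems(1) subspace_0 by blast
    define K where "K = V \<inter> sphere 0 1"
    have "compact K" unfolding K_def
      using closed_subspace[OF less.prems(1)] by (intro closed_Int_compact) auto
    moreover have "(1/norm v) *\<^sub>R v \<in> K" using v less.prems(1)
      by (simp add: K_def subspace_scale)
    hence "K \<noteq> {}" by blast
    moreover have "continuous_on K (\<lambda>x. x \<bullet> (M *v x))"
      by (intro continuous_intros linear_continuous_on) (simp add: linear_linear)
    ultimately obtain v0 where v0K: "v0 \<in> K" and v0max: "\<forall>y\<in>K. y \<bullet> (M *v y) \<le> v0 \<bullet> (M *v v0)"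
      using continuous_attains_sup by blast
    define \<mu> where "\<mu> = v0 \<bullet> (M *v v0)"
    have v0V: "v0 \<in> V" and nv0: "norm v0 = 1" using v0K by (auto simp: K_def)
    have v0v0: "v0 \<bullet> v0 = 1" using nv0 by (simp add: norm_eq_1)
    have bound: "y \<bullet> (M *v y) \<le> \<mu> * (y \<bullet> y)" if "y \<in> V" for y
    proof (cases "y = 0")
      case True then show ?thesis by simp
    next
      case False
      let ?z = "(1/norm y) *\<^sub>R y"
      have "?z \<in> K" using that False less.prems(1) by (simp add: K_def subspace_scale)
      hence "?z \<bullet> (M *v ?z) \<le> \<mu>" using v0max \<mu>_def by blast
      hence "(1/norm y)^2 * (y \<bullet> (M *v y)) \<le> \<mu>"
        by (simp add: matrix_vector_mult_scaleR power2_eq_square algebra_simps)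
      hence "y \<bullet> (M *v y) \<le> \<mu> * (norm y)^2" using False
        by (simp add: field_simps power2_eq_square)
      then show ?thesis by (simp add: power2_norm_eq_inner)
    qed
    define u where "u = M *v v0 - \<mu> *\<^sub>R v0"
    have uV: "u \<in> V" unfolding u_def
      using less.prems v0V by (simp add: subspace_diff subspace_scale)
    have uv0: "u \<bullet> v0 = 0" unfolding u_def using v0v0
      by (simp add: inner_diff_left \<mu>_def inner_commute[of "M *v v0" v0])
    have uM: "u \<bullet> (M *v v0) = u \<bullet> u"
    proof -
      have "M *v v0 = u + \<mu> *\<^sub>R v0" by (simp add: u_def)
      then show ?thesis by (simp add: inner_add_right uv0)
    qed
    have "u \<bullet> u = 0"
    proof (rule quad_arg)
      fix t :: real
      have "v0 + t *\<^sub>R u \<in> V" using less.prems(1) v0V uV by (simp add: subspace_add subspace_scale)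
      from bound[OF this]
      have "(v0 + t *\<^sub>R u) \<bullet> (M *v (v0 + t *\<^sub>R u)) \<le> \<mu> * ((v0 + t *\<^sub>R u) \<bullet> (v0 + t *\<^sub>R u))" .
      moreover have "(v0 + t *\<^sub>R u) \<bullet> (M *v (v0 + t *\<^sub>R u)) = \<mu> + 2*t*(u \<bullet> u) + t^2 * (u \<bullet> (M *v u))"
      proof -
        have s: "v0 \<bullet> (M *v u) = u \<bullet> (M *v v0)" using sym_dot[OF sym, of u v0] by (simp add: inner_commute)
        show ?thesis
          by (simp add: matrix_vector_right_distrib matrix_vector_mult_scaleR inner_add_left inner_add_right
              s uM \<mu>_def power2_eq_square algebra_simps)
      qed
      moreover have "(v0 + t *\<^sub>R u) \<bullet> (v0 + t *\<^sub>R u) = 1 + t^2 * (u \<bullet> u)"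
        by (simp add: inner_add_left inner_add_right v0v0 uv0 inner_commute[of v0 u] power2_eq_square)
      ultimately have "\<mu> + 2*t*(u \<bullet> u) + t^2 * (u \<bullet> (M *v u)) \<le> \<mu> * (1 + t^2 * (u \<bullet> u))"
        by (simp only:)
      then show "2 * t * (u \<bullet> u) \<le> t^2 * (\<mu> * (u \<bullet> u) - u \<bullet> (M *v u))"
        by (rule aux_ineq)
    qed simp
    hence u0: "u = 0" by simp
    hence Mv0: "M *v v0 = \<mu> *\<^sub>R v0" by (simp add: u_def)
    define V' where "V' = V \<inter> {x. v0 \<bullet> x = 0}"
    have subV': "subspace V'" unfolding V'_def
      using less.prems(1) subspace_hyperplane[of v0] unfolding subspace_def by auto
    have invV': "\<forall>w\<in>V'. M *v w \<in> V'"
    proof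
      fix w assume w: "w \<in> V'"
      have "v0 \<bullet> (M *v w) = (M *v v0) \<bullet> w" using sym_dot[OF sym] by simp
      also have "\<dots> = 0" using w by (simp add: Mv0 V'_def)
      finally show "M *v w \<in> V'" using w less.prems(2) by (simp add: V'_def)
    qed
    have "V' \<subset> V" using v0V v0v0 unfolding V'_def by force
    hence "dim V' < dim V"
      using dim_psubset[of V' V] subV' less.prems(1) by (metis span_eq_iff)
    from less.hyps[OF this subV' invV'] obtain B' where B':
      "finite B'" "B' \<subseteq> V'" "\<forall>e\<in>B'. norm e = 1 \<and> M *v e = (e \<bullet> (M *v e)) *\<^sub>R e"
      "pairwise orthogonal B'" "span B' = V'" by blast
    show ?thesis
    proof (intro exI[of _ "insert v0 B'"] conjI)
      show "finite (insert v0 B')" using B' by simp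
      show "insert v0 B' \<subseteq> V" using B' v0V by (auto simp: V'_def)
      show "\<forall>e\<in>insert v0 B'. norm e = 1 \<and> M *v e = (e \<bullet> (M *v e)) *\<^sub>R e"
        using B'(3) nv0 Mv0 \<mu>_def by auto
      show "pairwise orthogonal (insert v0 B')"
        using B'(2,4) unfolding pairwise_insert
        by (auto simp: V'_def orthogonal_def inner_commute)
      show "span (insert v0 B') = V"
      proof
        show "span (insert v0 B') \<subseteq> V"
          using B' v0V less.prems(1) by (metis \<open>insert v0 B' \<subseteq> V\<close> span_minimal)
        show "V \<subseteq> span (insert v0 B')"
        proof
          fix x assume x: "x \<in> V"
          have "x - (v0 \<bullet> x) *\<^sub>R v0 \<in> V'" unfolding V'_def
            using x v0V less.prems(1) v0v0 by (simp add: subspace_diff subspace_scale inner_diff_right)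
          hence "x - (v0 \<bullet> x) *\<^sub>R v0 \<in> span (insert v0 B')"
            using B'(5) span_mono[of B' "insert v0 B'"] by auto
          moreover have "(v0 \<bullet> x) *\<^sub>R v0 \<in> span (insert v0 B')"
            by (simp add: span_base span_scale)
          ultimately show "x \<in> span (insert v0 B')"
            using span_add by fastforce
        qed
      qed
    qed
  qed
qed

definition eigbasis :: "real^'d^'d \<Rightarrow> (real^'d) set \<Rightarrow> bool" where
  "eigbasis M B \<longleftrightarrow> finite B \<and> (\<forall>e\<in>B. norm e = 1 \<and> M *v e = (e \<bullet> (M *v e)) *\<^sub>R e)
      \<and> pairwise orthogonal B \<and> span B = UNIV"

lemma eigbasis_exists: "sym_mat M \<Longrightarrow> \<exists>B. eigbasis M B"
  using spectral_sub[of M UNIV] unfolding eigbasis_def by (auto simp: subspace_UNIV)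

lemma eb_finite: "eigbasis M B \<Longrightarrow> finite B" by (simp add: eigbasis_def)
lemma eb_unit: "eigbasis M B \<Longrightarrow> e \<in> B \<Longrightarrow> e \<bullet> e = 1"
  by (simp add: eigbasis_def norm_eq_1)
lemma eb_eig: "eigbasis M B \<Longrightarrow> e \<in> B \<Longrightarrow> M *v e = (e \<bullet> (M *v e)) *\<^sub>R e"
  by (simp add: eigbasis_def)
lemma eb_orth: "eigbasis M B \<Longrightarrow> e \<in> B \<Longrightarrow> f \<in> B \<Longrightarrow> e \<noteq> f \<Longrightarrow> e \<bullet> f = 0"
  unfolding eigbasis_def pairwise_def orthogonal_def by blast

lemma eb_dot_sum:
  assumes "eigbasis M B" "e0 \<in> B"
  shows "(\<Sum>e\<in>B. u e *\<^sub>R e) \<bullet> e0 = u e0"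
proof -
  have "(\<Sum>e\<in>B. u e *\<^sub>R e) \<bullet> e0 = (\<Sum>e\<in>B. u e * (e \<bullet> e0))"
    by (simp add: inner_sum_left)
  also have "\<dots> = (\<Sum>e\<in>B. if e = e0 then u e0 else 0)"
    using assms eb_unit[OF assms] eb_orth[OF assms(1)] by (intro sum.cong) auto
  also have "\<dots> = u e0" using assms eb_finite[OF assms(1)] by simp
  finally show ?thesis .
qed

lemma eb_expand:
  assumes "eigbasis M B"
  shows "v = (\<Sum>e\<in>B. (v \<bullet> e) *\<^sub>R e)"
proof -
  have "v \<in> span B" using assms by (simp add: eigbasis_def)
  then obtain u where u: "v = (\<Sum>e\<in>B. u e *\<^sub>R e)"
    using span_finite[OF eb_finite[OF assms]] by auto
  have "\<And>e. e \<in> B \<Longrightarrow> v \<bullet> e = u e" using eb_dot_sum[OF assms] u by simp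
  then show ?thesis by (subst u) (intro sum.cong, auto)
qed

lemma eb_inner:
  assumes "eigbasis M B"
  shows "v \<bullet> w = (\<Sum>e\<in>B. (v \<bullet> e) * (w \<bullet> e))"
proof -
  have "v \<bullet> w = (\<Sum>e\<in>B. (v \<bullet> e) *\<^sub>R e) \<bullet> w" using eb_expand[OF assms, of v] by simp
  also have "\<dots> = (\<Sum>e\<in>B. (v \<bullet> e) * (e \<bullet> w))" by (simp add: inner_sum_left)
  also have "\<dots> = (\<Sum>e\<in>B. (v \<bullet> e) * (w \<bullet> e))" by (intro sum.cong refl) (simp add: inner_commute)
  finally show ?thesis .
qed

lemma eb_Mdot:
  assumes "eigbasis M B" "sym_mat M" "e \<in> B"
  shows "(M *v v) \<bullet> e = (e \<bullet> (M *v e)) * (v \<bullet> e)"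
proof -
  have "(M *v v) \<bullet> e = v \<bullet> (M *v e)" by (rule sym_dot[OF assms(2)])
  also have "\<dots> = (e \<bullet> (M *v e)) * (v \<bullet> e)"
    by (subst eb_eig[OF assms(1,3)]) simp
  finally show ?thesis .
qed

lemma eb_quad:
  assumes "eigbasis M B" "sym_mat M"
  shows "v \<bullet> (M *v v) = (\<Sum>e\<in>B. (e \<bullet> (M *v e)) * (v \<bullet> e)^2)"
  using eb_inner[OF assms(1), of v "M *v v"] eb_Mdot[OF assms]
  by (simp add: power2_eq_square mult_ac)

lemma eb_norm2:
  assumes "eigbasis M B"
  shows "v \<bullet> v = (\<Sum>e\<in>B. (v \<bullet> e)^2)"
  using eb_inner[OF assms, of v v] by (simp add: power2_eq_square)

lemma eb_nonempty:
  assumes "eigbasis M B" shows "B \<noteq> {}"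
proof
  assume "B = {}"
  hence "(axis undefined 1::real^'d) \<bullet> axis undefined 1 = 0" using eb_norm2[OF assms, of "axis undefined 1"] by simp
  then show False by (simp add: inner_axis_axis)
qed

lemma eb_eigenvalues:
  assumes "eigbasis M B" "sym_mat M"
  shows "real_eigenvalues M = (\<lambda>e. e \<bullet> (M *v e)) ` B"
proof
  show "(\<lambda>e. e \<bullet> (M *v e)) ` B \<subseteq> real_eigenvalues M"
  proof
    fix l assume "l \<in> (\<lambda>e. e \<bullet> (M *v e)) ` B"
    then obtain e where e: "e \<in> B" "l = e \<bullet> (M *v e)" by auto
    have "e \<noteq> 0" using eb_unit[OF assms(1) e(1)] by auto
    then show "l \<in> real_eigenvalues M" unfolding real_eigenvalues_def
      using eb_eig[OF assms(1) e(1)] e(2) by auto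
  qed
  show "real_eigenvalues M \<subseteq> (\<lambda>e. e \<bullet> (M *v e)) ` B"
  proof
    fix l assume "l \<in> real_eigenvalues M"
    then obtain v where v: "v \<noteq> 0" "M *v v = l *\<^sub>R v" by (auto simp: real_eigenvalues_def)
    have "\<exists>e\<in>B. v \<bullet> e \<noteq> 0"
    proof (rule ccontr)
      assume "\<not> ?thesis"
      hence "v \<bullet> v = 0" using eb_norm2[OF assms(1), of v] by simp
      thus False using v by simp
    qed
    then obtain e where e: "e \<in> B" "v \<bullet> e \<noteq> 0" by blast
    have "l * (v \<bullet> e) = (e \<bullet> (M *v e)) * (v \<bullet> e)"
      using eb_Mdot[OF assms e(1), of v] v(2) by simp
    hence "l = e \<bullet> (M *v e)" using e(2) by simp
    then show "l \<in> (\<lambda>e. e \<bullet> (M *v e)) ` B" using e by auto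
  qed
qed

lemma eb_lam:
  assumes "eigbasis M B" "sym_mat M"
  shows "lam_min M = Min ((\<lambda>e. e \<bullet> (M *v e)) ` B)" "lam_max M = Max ((\<lambda>e. e \<bullet> (M *v e)) ` B)"
  using eb_eigenvalues[OF assms] by (auto simp: lam_min_def lam_max_def)

lemma eb_lam_bounds:
  assumes "eigbasis M B" "sym_mat M" "e \<in> B"
  shows "lam_min M \<le> e \<bullet> (M *v e)" "e \<bullet> (M *v e) \<le> lam_max M"
  using eb_lam[OF assms(1,2)] eb_finite[OF assms(1)] assms(3) by auto

lemma sym_eigbasis: "sym_mat M \<Longrightarrow> \<exists>B. eigbasis M B" by (rule eigbasis_exists)

lemma rayleigh:
  fixes M :: "real^'d^'d"
  assumes "sym_mat M"
  shows "lam_min M * (v \<bullet> v) \<le> v \<bullet> (M *v v)" "v \<bullet> (M *v v) \<le> lam_max M * (v \<bullet> v)"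
proof -
  obtain B where B: "eigbasis M B" using eigbasis_exists[OF assms] by blast
  have "lam_min M * (v \<bullet> v) = (\<Sum>e\<in>B. lam_min M * (v \<bullet> e)^2)"
    by (simp add: eb_norm2[OF B, of v] sum_distrib_left)
  also have "\<dots> \<le> (\<Sum>e\<in>B. (e \<bullet> (M *v e)) * (v \<bullet> e)^2)"
    by (intro sum_mono mult_right_mono eb_lam_bounds[OF B assms]) auto
  also have "\<dots> = v \<bullet> (M *v v)" by (simp add: eb_quad[OF B assms, of v])
  finally show "lam_min M * (v \<bullet> v) \<le> v \<bullet> (M *v v)" .
  have "v \<bullet> (M *v v) = (\<Sum>e\<in>B. (e \<bullet> (M *v e)) * (v \<bullet> e)^2)" by (simp add: eb_quad[OF B assms, of v])
  also have "\<dots> \<le> (\<Sum>e\<in>B. lam_max M * (v \<bullet> e)^2)"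
    by (intro sum_mono mult_right_mono eb_lam_bounds[OF B assms]) auto
  also have "\<dots> = lam_max M * (v \<bullet> v)"
    by (simp add: eb_norm2[OF B, of v] sum_distrib_left)
  finally show "v \<bullet> (M *v v) \<le> lam_max M * (v \<bullet> v)" .
qed

lemma lam_in:
  assumes "sym_mat M"
  shows "lam_min M \<in> real_eigenvalues M" "lam_max M \<in> real_eigenvalues M"
proof -
  obtain B where B: "eigbasis M B" using eigbasis_exists[OF assms] by blast
  show "lam_min M \<in> real_eigenvalues M" "lam_max M \<in> real_eigenvalues M"
    using eb_lam[OF B assms] eb_eigenvalues[OF B assms] eb_finite[OF B] eb_nonempty[OF B] by auto
qed

lemma posdef_lam_min_pos:
  assumes "posdef M" shows "lam_min M > 0"
proof -
  have s: "sym_mat M" using assms by (simp add: posdef_def)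
  obtain v where v: "v \<noteq> 0" "M *v v = lam_min M *\<^sub>R v"
    using lam_in(1)[OF s] by (auto simp: real_eigenvalues_def)
  have "0 < v \<bullet> (M *v v)" using assms v(1) by (simp add: posdef_def)
  also have "\<dots> = lam_min M * (v \<bullet> v)" using v(2) by simp
  moreover have "v \<bullet> v > 0" using v(1) by simp
  ultimately show ?thesis by (simp add: zero_less_mult_iff)
qed

lemma lam_min_le_max: "sym_mat M \<Longrightarrow> lam_min M \<le> lam_max M"
proof -
  assume s: "sym_mat M"
  obtain B where B: "eigbasis M B" using eigbasis_exists[OF s] by blast
  obtain e where "e \<in> B" using eb_nonempty[OF B] by blast
  from eb_lam_bounds[OF B s this] show ?thesis by linarith
qed

definition matfun :: "(real^'d) set \<Rightarrow> (real^'d \<Rightarrow> real) \<Rightarrow> real^'d^'d" where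
  "matfun B f = (\<chi> i j. \<Sum>e\<in>B. f e * e$i * e$j)"

lemma mf_apply:
  assumes "finite B"
  shows "matfun B f *v v = (\<Sum>e\<in>B. (f e * (e \<bullet> v)) *\<^sub>R e)"
proof -
  have "(matfun B f *v v) $ i = (\<Sum>e\<in>B. (f e * (e \<bullet> v)) *\<^sub>R e) $ i" for i
  proof -
    have "(matfun B f *v v) $ i = (\<Sum>j\<in>UNIV. (\<Sum>e\<in>B. f e * e$i * e$j) * v$j)"
      by (simp add: matrix_vector_mult_def matfun_def)
    also have "\<dots> = (\<Sum>j\<in>UNIV. \<Sum>e\<in>B. f e * e$i * (e$j * v$j))"
      by (simp add: sum_distrib_right mult.assoc)
    also have "\<dots> = (\<Sum>e\<in>B. \<Sum>j\<in>UNIV. f e * e$i * (e$j * v$j))"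
      by (rule sum.swap)
    also have "\<dots> = (\<Sum>e\<in>B. f e * e$i * (e \<bullet> v))"
      by (simp add: inner_vec_def sum_distrib_left)
    also have "\<dots> = (\<Sum>e\<in>B. (f e * (e \<bullet> v)) *\<^sub>R e) $ i"
      by (simp add: sum_component mult_ac)
    finally show ?thesis .
  qed
  then show ?thesis by (simp add: vec_eq_iff)
qed

lemma mf_cong: "(\<And>e. e \<in> B \<Longrightarrow> f e = g e) \<Longrightarrow> matfun B f = matfun B g"
  unfolding matfun_def by (simp add: vec_eq_iff)

lemma mf_sym: "sym_mat (matfun B f)"
  by (simp add: sym_mat_def matfun_def transpose_def vec_eq_iff mult_ac)

lemma mf_dot:
  assumes "eigbasis M B" "e0 \<in> B"
  shows "(matfun B f *v v) \<bullet> e0 = f e0 * (e0 \<bullet> v)"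
  using eb_dot_sum[OF assms, of "\<lambda>e. f e * (e \<bullet> v)"] mf_apply[OF eb_finite[OF assms(1)]] by simp

lemma mf_eq:
  assumes "eigbasis M B" and "\<And>e v. e \<in> B \<Longrightarrow> (Q *v v) \<bullet> e = f e * (e \<bullet> v)"
  shows "Q = matfun B f"
proof -
  have "Q *v v = matfun B f *v v" for v
  proof -
    have "Q *v v = (\<Sum>e\<in>B. ((Q *v v) \<bullet> e) *\<^sub>R e)" by (rule eb_expand[OF assms(1)])
    also have "\<dots> = (\<Sum>e\<in>B. ((matfun B f *v v) \<bullet> e) *\<^sub>R e)"
      using assms(2) mf_dot[OF assms(1)] by (intro sum.cong) auto
    also have "\<dots> = matfun B f *v v" by (rule eb_expand[OF assms(1), symmetric])
    finally show ?thesis .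
  qed
  then show ?thesis by (simp add: matrix_eq)
qed

lemma mf_mult:
  assumes "eigbasis M B"
  shows "matfun B f ** matfun B g = matfun B (\<lambda>e. f e * g e)"
proof (rule mf_eq[OF assms])
  fix e v assume e: "e \<in> B"
  have "((matfun B f ** matfun B g) *v v) \<bullet> e = (matfun B f *v (matfun B g *v v)) \<bullet> e"
    by (simp add: matrix_vector_mul_assoc)
  also have "\<dots> = f e * (e \<bullet> (matfun B g *v v))" by (rule mf_dot[OF assms e])
  also have "\<dots> = f e * (g e * (e \<bullet> v))" using mf_dot[OF assms e, of g v] by (simp add: inner_commute)
  finally show "((matfun B f ** matfun B g) *v v) \<bullet> e = f e * g e * (e \<bullet> v)" by simp
qed

lemma mf_one:
  assumes "eigbasis M B"
  shows "matfun B (\<lambda>e. 1) = mat 1"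
  by (rule mf_eq[OF assms, symmetric]) (simp add: inner_commute)

lemma mf_self:
  assumes "eigbasis M B" "sym_mat M"
  shows "matfun B (\<lambda>e. e \<bullet> (M *v e)) = M"
  by (rule mf_eq[OF assms(1), symmetric]) (metis eb_Mdot[OF assms] inner_commute)

lemma mf_posdef:
  assumes "eigbasis M B" "\<And>e. e \<in> B \<Longrightarrow> f e > 0"
  shows "posdef (matfun B f)"
  unfolding posdef_def
proof (intro conjI allI impI mf_sym)
  fix v :: "real^'a" assume v: "v \<noteq> 0"
  have q: "v \<bullet> (matfun B f *v v) = (\<Sum>e\<in>B. f e * (v \<bullet> e)^2)"
    using eb_inner[OF assms(1), of v "matfun B f *v v"] mf_dot[OF assms(1)]
    by (simp add: power2_eq_square inner_commute mult_ac)
  have "\<exists>e\<in>B. v \<bullet> e \<noteq> 0"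
  proof (rule ccontr)
    assume "\<not> ?thesis"
    hence "v \<bullet> v = 0" using eb_norm2[OF assms(1), of v] by simp
    thus False using v by simp
  qed
  then obtain e0 where e0: "e0 \<in> B" "v \<bullet> e0 \<noteq> 0" by blast
  have "0 < f e0 * (v \<bullet> e0)^2" using assms(2)[OF e0(1)] e0(2) by simp
  also have "\<dots> \<le> (\<Sum>e\<in>B. f e * (v \<bullet> e)^2)"
    using eb_finite[OF assms(1)] e0(1) assms(2)
    by (intro member_le_sum) (auto, metis less_imp_le mult_nonneg_nonneg zero_le_power2)
  finally show "v \<bullet> (matfun B f *v v) > 0" using q by simp
qed

lemma posdef_eig_pos:
  assumes "posdef M" "eigbasis M B" "e \<in> B"
  shows "e \<bullet> (M *v e) > 0"
  using assms eb_unit[OF assms(2,3)] unfolding posdef_def by (metis inner_zero_left zero_neq_one)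

lemma mf_inverse:
  assumes "posdef S" "eigbasis S B"
  shows "matrix_inv S = matfun B (\<lambda>e. 1 / (e \<bullet> (S *v e)))"
    "S ** matrix_inv S = mat 1" "matrix_inv S ** S = mat 1"
proof -
  have s: "sym_mat S" using assms by (simp add: posdef_def)
  let ?P = "matfun B (\<lambda>e. 1 / (e \<bullet> (S *v e)))"
  have pos: "\<And>e. e \<in> B \<Longrightarrow> e \<bullet> (S *v e) > 0" using posdef_eig_pos[OF assms] by blast
  have "S ** ?P = matfun B (\<lambda>e. e \<bullet> (S *v e)) ** ?P" using mf_self[OF assms(2) s] by simp
  also have "\<dots> = matfun B (\<lambda>e. (e \<bullet> (S *v e)) * (1 / (e \<bullet> (S *v e))))" by (rule mf_mult[OF assms(2)])
  also have "\<dots> = matfun B (\<lambda>e. 1)" using pos by (intro mf_cong) (simp add: less_imp_neq[symmetric])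
  finally have "S ** ?P = mat 1" using mf_one[OF assms(2)] by simp
  have "?P ** S = ?P ** matfun B (\<lambda>e. e \<bullet> (S *v e))" using mf_self[OF assms(2) s] by simp
  also have "\<dots> = matfun B (\<lambda>e. (1 / (e \<bullet> (S *v e))) * (e \<bullet> (S *v e)))" by (rule mf_mult[OF assms(2)])
  also have "\<dots> = matfun B (\<lambda>e. 1)" using pos by (intro mf_cong) (simp add: less_imp_neq[symmetric])
  finally have "?P ** S = mat 1" using mf_one[OF assms(2)] by simp
  with \<open>S ** ?P = mat 1\<close> have ex: "\<exists>A'. S ** A' = mat 1 \<and> A' ** S = mat 1" by blast
  have inv: "S ** matrix_inv S = mat 1 \<and> matrix_inv S ** S = mat 1"
    unfolding matrix_inv_def by (rule someI_ex[OF ex])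
  thus "S ** matrix_inv S = mat 1" "matrix_inv S ** S = mat 1" by auto
  have "matrix_inv S = matrix_inv S ** (S ** ?P)" using \<open>S ** ?P = mat 1\<close> by simp
  also have "\<dots> = ?P" using inv by (simp add: matrix_mul_assoc)
  finally show "matrix_inv S = ?P" .
qed

lemma mf_eig:
  assumes "eigbasis M B" "e0 \<in> B"
  shows "matfun B f *v e0 = f e0 *\<^sub>R e0"
proof -
  have "matfun B f *v e0 = (\<Sum>e\<in>B. ((matfun B f *v e0) \<bullet> e) *\<^sub>R e)" by (rule eb_expand[OF assms(1)])
  also have "\<dots> = (\<Sum>e\<in>B. if e = e0 then f e0 *\<^sub>R e0 else 0)"
    using mf_dot[OF assms(1)] eb_unit[OF assms(1)] eb_orth[OF assms(1) _ assms(2)] by (intro sum.cong) auto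
  also have "\<dots> = f e0 *\<^sub>R e0" using eb_finite[OF assms(1)] assms(2) by simp
  finally show ?thesis .
qed

lemma psd_sqrt_mf:
  assumes B: "eigbasis M B" and pos: "\<And>e. e \<in> B \<Longrightarrow> p e > 0"
  shows "psd_sqrt (matfun B p) = matfun B (\<lambda>e. sqrt (p e))"
  unfolding psd_sqrt_def
proof (rule the_equality)
  let ?R = "matfun B (\<lambda>e. sqrt (p e))"
  have RR: "?R ** ?R = matfun B p"
    using mf_mult[OF B, of "\<lambda>e. sqrt (p e)" "\<lambda>e. sqrt (p e)"] pos
    using mf_cong[of B "\<lambda>e. \<bar>p e\<bar>" p] by force
  show "posdef ?R \<and> ?R ** ?R = matfun B p"
    using RR mf_posdef[OF B, of "\<lambda>e. sqrt (p e)"] pos by simp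
  fix R assume R: "posdef R \<and> R ** R = matfun B p"
  have sR: "sym_mat R" using R by (simp add: posdef_def)
  have Re: "R *v e = sqrt (p e) *\<^sub>R e" if e: "e \<in> B" for e
  proof -
    define s where "s = sqrt (p e)"
    have s: "s > 0" "s * s = p e" using pos[OF e] by (auto simp: s_def)
    define w where "w = R *v e - s *\<^sub>R e"
    have "R *v (R *v e) = p e *\<^sub>R e"
      using R mf_eig[OF B e, of p] by (simp add: matrix_vector_mul_assoc)
    hence "R *v w = - s *\<^sub>R w"
      by (simp add: w_def matrix_vector_mult_diff_distrib matrix_vector_mult_scaleR algebra_simps
          scaleR_diff_right s(2)[symmetric])
    hence "w \<bullet> (R *v w) = - s * (w \<bullet> w)" by simp
    also have "\<dots> \<le> 0" using s by simp
    finally have "w = 0" using R unfolding posdef_def by (meson not_le)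
    thus ?thesis by (simp add: w_def s_def)
  qed
  show "R = ?R"
  proof (rule mf_eq[OF B])
    fix e v assume e: "e \<in> B"
    have "(R *v v) \<bullet> e = v \<bullet> (R *v e)" by (rule sym_dot[OF sR])
    also have "\<dots> = sqrt (p e) * (e \<bullet> v)" by (simp add: Re[OF e] inner_commute)
    finally show "(R *v v) \<bullet> e = sqrt (p e) * (e \<bullet> v)" .
  qed
qed

lemma taylor2:
  fixes g :: "real^'d \<Rightarrow> real" and Dg :: "real^'d \<Rightarrow> real^'d" and Hg :: "real^'d \<Rightarrow> real^'d^'d"
  assumes d1: "\<forall>x\<in>cball c r. (g has_derivative (\<lambda>h. Dg x \<bullet> h)) (at x within cball c r)"
    and d2: "\<forall>x\<in>cball c r. (Dg has_derivative (\<lambda>h. Hg x *v h)) (at x within cball c r)"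
    and hb: "\<forall>x\<in>cball c r. onorm (\<lambda>h. Hg x *v h) \<le> K"
    and x: "x \<in> cball c r"
  shows "\<bar>g x - g c - Dg c \<bullet> (x - c)\<bar> \<le> K/2 * (norm (x - c))^2"
proof (cases "x = c")
  case True then show ?thesis by simp
next
  case False
  define u where "u = x - c"
  have u0: "u \<noteq> 0" using False by (simp add: u_def)
  have ur: "norm u \<le> r" using x by (simp add: u_def dist_norm norm_minus_commute)
  have c: "c \<in> cball c r" using x by (simp add: dist_norm) (meson norm_ge_zero order_trans)
  have seg: "c + t *\<^sub>R u \<in> cball c r" if "t \<in> {0..1}" for t
  proof -
    have "norm (t *\<^sub>R u) \<le> norm u" using that by (simp add: mult_left_le_one_le)
    thus ?thesis using ur by (simp add: dist_norm)
  qed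
  have segi: "c + t *\<^sub>R u \<in> ball c r" if "0 < t" "t < 1" for t
  proof -
    have "norm (t *\<^sub>R u) < norm u" using that u0 by simp
    thus ?thesis using ur by (simp add: dist_norm)
  qed
  have Dgb: "norm (Dg y - Dg c) \<le> K * norm (y - c)" if "y \<in> cball c r" for y
    by (rule differentiable_bound[where f=Dg and f'="\<lambda>x h. Hg x *v h" and B=K and S="cball c r"])
      (use d2 hb that c in auto)
  define f where "f t = g (c + t *\<^sub>R u) - t * (Dg c \<bullet> u)" for t
  define \<phi> where "\<phi> t = K/2 * (norm u)^2 * t^2" for t :: real
  have gcont: "continuous_on (cball c r) g"
    using d1 by (intro has_derivative_continuous_on) auto
  have "norm (f 1 - f 0) \<le> \<phi> 1 - \<phi> 0"
  proof (rule differentiable_bound_general[of 0 1 f \<phi> "\<lambda>t. Dg (c + t *\<^sub>R u) \<bullet> u - Dg c \<bullet> u"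
        "\<lambda>t. K * (norm u)^2 * t"])
    show "(0::real) < 1" by simp
    have "continuous_on {0..1} (\<lambda>t. c + t *\<^sub>R u)" by (intro continuous_intros)
    moreover have "(\<lambda>t. c + t *\<^sub>R u) ` {0..1} \<subseteq> cball c r" using seg by blast
    ultimately have "continuous_on {0..1} (\<lambda>t. g (c + t *\<^sub>R u))"
      using continuous_on_compose2[OF gcont] by blast
    moreover have "continuous_on {0..1} (\<lambda>t::real. t * (Dg c \<bullet> u))" by (intro continuous_intros)
    ultimately show "continuous_on {0..1} f" unfolding f_def by (rule continuous_on_diff)
    show "continuous_on {0..1} \<phi>" unfolding \<phi>_def by (intro continuous_intros)
    fix t :: real assume t: "0 < t" "t < 1"
    have gat: "(g has_derivative (\<lambda>h. Dg (c + t *\<^sub>R u) \<bullet> h)) (at (c + t *\<^sub>R u))"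
    proof -
      have "(g has_derivative (\<lambda>h. Dg (c + t *\<^sub>R u) \<bullet> h)) (at (c + t *\<^sub>R u) within cball c r)"
        using d1 seg[of t] t by simp
      hence "(g has_derivative (\<lambda>h. Dg (c + t *\<^sub>R u) \<bullet> h)) (at (c + t *\<^sub>R u) within ball c r)"
        by (rule has_derivative_subset) (rule ball_subset_cball)
      thus ?thesis using at_within_open[OF segi[OF t] open_ball] by simp
    qed
    have lin: "((\<lambda>t. c + t *\<^sub>R u) has_derivative (\<lambda>h. h *\<^sub>R u)) (at t)"
      by (auto intro!: derivative_eq_intros)
    have "((\<lambda>t. g (c + t *\<^sub>R u)) has_derivative (\<lambda>h. Dg (c + t *\<^sub>R u) \<bullet> (h *\<^sub>R u))) (at t)"
      using diff_chain_at[OF lin gat] by (simp add: o_def)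
    hence "((\<lambda>t. g (c + t *\<^sub>R u)) has_derivative (\<lambda>h. h * (Dg (c + t *\<^sub>R u) \<bullet> u))) (at t)"
      by simp
    hence "(f has_derivative (\<lambda>h. h * (Dg (c + t *\<^sub>R u) \<bullet> u) - h * (Dg c \<bullet> u))) (at t)"
      unfolding f_def by (auto intro!: derivative_eq_intros)
    thus "(f has_vector_derivative Dg (c + t *\<^sub>R u) \<bullet> u - Dg c \<bullet> u) (at t)"
      by (simp add: has_vector_derivative_def algebra_simps)
    show "(\<phi> has_vector_derivative K * (norm u)^2 * t) (at t)"
      unfolding \<phi>_def has_vector_derivative_def
      by (auto intro!: derivative_eq_intros simp: algebra_simps power2_eq_square)
    have "norm (Dg (c + t *\<^sub>R u) \<bullet> u - Dg c \<bullet> u) = \<bar>(Dg (c + t *\<^sub>R u) - Dg c) \<bullet> u\<bar>"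
      by (simp add: inner_diff_left)
    also have "\<dots> \<le> norm (Dg (c + t *\<^sub>R u) - Dg c) * norm u" by (rule Cauchy_Schwarz_ineq2)
    also have "\<dots> \<le> (K * norm (t *\<^sub>R u)) * norm u"
    proof (rule mult_right_mono)
      show "norm (Dg (c + t *\<^sub>R u) - Dg c) \<le> K * norm (t *\<^sub>R u)" using Dgb[OF seg[of t]] t by simp
    qed simp
    also have "\<dots> = K * (norm u)^2 * t" using t by (simp add: power2_eq_square)
    finally show "norm (Dg (c + t *\<^sub>R u) \<bullet> u - Dg c \<bullet> u) \<le> K * (norm u)^2 * t" .
  qed
  moreover have "f 1 - f 0 = g x - g c - Dg c \<bullet> (x - c)" by (simp add: f_def u_def)
  ultimately show ?thesis by (simp add: \<phi>_def u_def)
qed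

lemma exp_quad:
  fixes u :: real
  assumes "\<bar>u\<bar> \<le> 1"
  shows "exp u - 1 \<le> u + 3/2 * u^2"
proof -
  obtain t where t: "\<bar>t\<bar> \<le> \<bar>u\<bar>" "exp u = (\<Sum>m<2. u ^ m / fact m) + exp t / fact 2 * u ^ 2"
    using Maclaurin_exp_le[of u 2] by blast
  have "exp t \<le> exp 1" using t(1) assms by simp
  also have "\<dots> \<le> 3" by (rule exp_le)
  finally have "exp t / 2 * u^2 \<le> 3/2 * u^2" by (intro mult_right_mono) auto
  moreover have "exp u = 1 + u + exp t / 2 * u^2" using t(2) by (simp add: numeral_2_eq_2)
  ultimately show ?thesis by simp
qed

lemma sq_ineq: "(2 * a + b)^2 \<le> 8 * a^2 + 2 * (b::real)^2"
proof -
  have "0 \<le> (2 * a - b)^2" by simp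
  thus ?thesis by (simp add: power2_eq_square algebra_simps)
qed

lemma sig_apply:
  assumes "finite JJ"
  shows "sigma2 JJ g c *v v = (\<Sum>J\<in>JJ. (g J c * (J \<bullet> v)) *\<^sub>R J)"
proof -
  have "(sigma2 JJ g c *v v) $ i = (\<Sum>J\<in>JJ. (g J c * (J \<bullet> v)) *\<^sub>R J) $ i" for i
  proof -
    have "(sigma2 JJ g c *v v) $ i = (\<Sum>k\<in>UNIV. (\<Sum>J\<in>JJ. J$i * J$k * g J c) * v$k)"
      by (simp add: matrix_vector_mult_def sigma2_def)
    also have "\<dots> = (\<Sum>k\<in>UNIV. \<Sum>J\<in>JJ. (J$i * J$k * g J c) * v$k)"
      by (simp only: sum_distrib_right)
    also have "\<dots> = (\<Sum>k\<in>UNIV. \<Sum>J\<in>JJ. J$i * g J c * (J$k * v$k))"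
      by (simp add: mult_ac)
    also have "\<dots> = (\<Sum>J\<in>JJ. \<Sum>k\<in>UNIV. J$i * g J c * (J$k * v$k))"
      by (rule sum.swap)
    also have "\<dots> = (\<Sum>J\<in>JJ. J$i * g J c * (J \<bullet> v))"
      by (simp add: inner_vec_def sum_distrib_left)
    also have "\<dots> = (\<Sum>J\<in>JJ. (g J c * (J \<bullet> v)) *\<^sub>R J) $ i"
      by (simp add: sum_component mult_ac)
    finally show ?thesis .
  qed
  then show ?thesis by (simp add: vec_eq_iff)
qed

lemma sig_quad:
  assumes "finite JJ"
  shows "v \<bullet> (sigma2 JJ g c *v v) = (\<Sum>J\<in>JJ. g J c * (J \<bullet> v)^2)"
  by (simp add: sig_apply[OF assms] inner_sum_right power2_eq_square inner_commute mult_ac)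

lemma sig_sym: "sym_mat (sigma2 JJ g c)"
  by (simp add: sym_mat_def sigma2_def transpose_def vec_eq_iff mult_ac)

lemma trace_col: "trace (M::real^'d^'d) = (\<Sum>i\<in>UNIV. (M *v axis i 1) $ i)"
  unfolding trace_def
proof (rule sum.cong)
  fix i
  have "(M *v axis i 1) $ i = (\<Sum>j\<in>UNIV. M$i$j * (if j = i then 1 else 0))"
    by (simp add: matrix_vector_mult_def axis_def)
  also have "\<dots> = M$i$i" by (simp add: if_distrib cong: if_cong)
  finally show "M$i$i = (M *v axis i 1) $ i" by simp
qed simp

lemma trace_sig:
  assumes "finite JJ"
  shows "trace (sigma2 JJ g c) = (\<Sum>J\<in>JJ. g J c * (J \<bullet> J))"
proof -
  have "trace (sigma2 JJ g c) = (\<Sum>i\<in>UNIV. \<Sum>J\<in>JJ. J$i * J$i * g J c)"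
    by (simp add: trace_def sigma2_def)
  also have "\<dots> = (\<Sum>J\<in>JJ. \<Sum>i\<in>UNIV. g J c * (J$i * J$i))" by (subst sum.swap) (simp add: mult_ac)
  also have "\<dots> = (\<Sum>J\<in>JJ. g J c * (J \<bullet> J))" by (simp add: inner_vec_def sum_distrib_left)
  finally show ?thesis .
qed

lemma lattice_norm:
  assumes "lattice_pt J"
  shows "norm J \<le> (norm J)^2"
proof (cases "J = 0")
  case True then show ?thesis by simp
next
  case False
  then obtain i where i: "J $ i \<noteq> 0" by (auto simp: vec_eq_iff)
  have "J $ i \<in> \<int>" using assms by (simp add: lattice_pt_def)
  then obtain k where k: "J $ i = of_int k" by (auto elim: Ints_cases)
  have "k \<noteq> 0" using i k by simp
  hence "1 \<le> \<bar>J $ i\<bar>" using k by simp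
  also have "\<dots> \<le> norm J" by (rule component_le_norm_cart)
  finally have "1 \<le> norm J" .
  then show ?thesis using mult_left_mono[of 1 "norm J" "norm J"] by (simp add: power2_eq_square)
qed

lemma lattice_add: "lattice_pt X \<Longrightarrow> lattice_pt J \<Longrightarrow> lattice_pt (X + J)"
  by (simp add: lattice_pt_def Ints_add)

lemma eb_inv_bounds:
  assumes "posdef S" "eigbasis S B"
  shows "(v \<bullet> v) / lam_max S \<le> v \<bullet> (matfun B (\<lambda>e. 1 / (e \<bullet> (S *v e))) *v v)"
    "v \<bullet> (matfun B (\<lambda>e. 1 / (e \<bullet> (S *v e))) *v v) \<le> (v \<bullet> v) / lam_min S"
proof -
  have s: "sym_mat S" using assms by (simp add: posdef_def)
  have pos: "\<And>e. e \<in> B \<Longrightarrow> e \<bullet> (S *v e) > 0" using posdef_eig_pos[OF assms] by blast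
  have q: "v \<bullet> (matfun B (\<lambda>e. 1 / (e \<bullet> (S *v e))) *v v) = (\<Sum>e\<in>B. (v \<bullet> e)^2 / (e \<bullet> (S *v e)))"
    using eb_inner[OF assms(2), of v "matfun B (\<lambda>e. 1 / (e \<bullet> (S *v e))) *v v"] mf_dot[OF assms(2)]
    by (simp add: power2_eq_square inner_commute)
  have lmin: "lam_min S > 0" by (rule posdef_lam_min_pos[OF assms(1)])
  have lmax: "lam_max S > 0" using lmin lam_min_le_max[OF s] by linarith
  have "(v \<bullet> v) / lam_max S = (\<Sum>e\<in>B. (v \<bullet> e)^2 / lam_max S)"
    by (simp add: eb_norm2[OF assms(2), of v] sum_divide_distrib)
  also have "\<dots> \<le> (\<Sum>e\<in>B. (v \<bullet> e)^2 / (e \<bullet> (S *v e)))"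
    by (intro sum_mono divide_left_mono eb_lam_bounds[OF assms(2) s] mult_pos_pos pos)
       (auto intro: lmax)
  finally show "(v \<bullet> v) / lam_max S \<le> v \<bullet> (matfun B (\<lambda>e. 1 / (e \<bullet> (S *v e))) *v v)" using q by simp
  have "(\<Sum>e\<in>B. (v \<bullet> e)^2 / (e \<bullet> (S *v e))) \<le> (\<Sum>e\<in>B. (v \<bullet> e)^2 / lam_min S)"
    by (intro sum_mono divide_left_mono eb_lam_bounds[OF assms(2) s] mult_pos_pos pos lmin) auto
  also have "\<dots> = (v \<bullet> v) / lam_min S"
    by (simp add: eb_norm2[OF assms(2), of v] sum_divide_distrib)
  finally show "v \<bullet> (matfun B (\<lambda>e. 1 / (e \<bullet> (S *v e))) *v v) \<le> (v \<bullet> v) / lam_min S" using q by simp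
qed

theorem lemma2p2:
  fixes JJ :: "(real^'d) set"
    and g :: "real^'d \<Rightarrow> real^'d \<Rightarrow> real"
    and Dg :: "real^'d \<Rightarrow> real^'d \<Rightarrow> real^'d"
    and Hg :: "real^'d \<Rightarrow> real^'d \<Rightarrow> real^'d^'d"
    and c :: "real^'d" and \<delta>0 :: real
    and A S :: "real^'d^'d"
    and n :: nat and \<delta> :: real and X :: "real^'d"
    and L0 L2 \<alpha>1 Kst \<delta>st \<delta>st' \<theta>1 nst Jmax \<Lambda>bar :: real
    and sig sS R :: "real^'d^'d"
    and h0 :: "real^'d \<Rightarrow> real"
  assumes n_ge: "real n \<ge> real CARD('d) ^ 4"
    and JJ_fin: "finite JJ"
    and JJ_lat: "\<forall>J\<in>JJ. lattice_pt J"
    and g_nonneg: "\<forall>J x. g J x \<ge> 0"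
    and \<delta>0_pos: "\<delta>0 > 0"
    (* (G0) *)
    and G0: "drift JJ g c = 0"
    (* A = DF(c) *)
    and A_deriv: "(drift JJ g has_derivative (\<lambda>h. A *v h)) (at c)"
    (* (G1) *)
    and G1: "hurwitz A"
    (* (G2): g^J is C^2 on the closed ball, with gradient Dg J and Hessian Hg J *)
    and G2_1: "\<forall>J\<in>JJ. \<forall>x\<in>cball c \<delta>0.
                 (g J has_derivative (\<lambda>h. Dg J x \<bullet> h)) (at x within cball c \<delta>0)"
    and G2_2: "\<forall>J\<in>JJ. \<forall>x\<in>cball c \<delta>0.
                 (Dg J has_derivative (\<lambda>h. Hg J x *v h)) (at x within cball c \<delta>0)"
    and G2_3: "\<forall>J\<in>JJ. continuous_on (cball c \<delta>0) (Hg J)"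
    (* (G3) *)
    and G3: "\<exists>\<epsilon>0>0. \<forall>J\<in>JJ. g J c > 0 \<and> (\<forall>x\<in>cball c \<delta>0. g J x \<ge> \<epsilon>0 * g J c)"
    (* (G4) *)
    and G4: "\<forall>j. \<exists>k :: real^'d \<Rightarrow> nat. axis j 1 = (\<Sum>J\<in>JJ. real (k J) *\<^sub>R J)"
    (* sigma^2 and Sigma *)
    and sig_def: "sig = sigma2 JJ g c"
    and S_posdef: "posdef S"
    and S_lyap: "A ** S + S ** transpose A + sig = 0"
    (* derived quantities *)
    and R_def: "R = psd_sqrt (matrix_inv S)"
    and sS_def: "sS = R ** sig ** R"
    and L0_def: "L0 = Max ((\<lambda>J. Sup ((\<lambda>x. g J x / g J c) ` cball c \<delta>0)) ` JJ)"
    and L2_def: "L2 = Max ((\<lambda>J. Sup ((\<lambda>x. onorm (\<lambda>h. Hg J x *v h) / g J c) ` cball c \<delta>0)) ` JJ)"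
    and \<Lambda>bar_def: "\<Lambda>bar = trace sig / real CARD('d)"
    and Jmax_def: "Jmax = Max ((\<lambda>J. norm (R *v J)) ` JJ)"
    and \<alpha>1_def: "\<alpha>1 = lam_min sS / 2"
    and Kst_def: "Kst = sqrt (2 * L0 * trace sS / (real CARD('d) * \<alpha>1))"
    and \<delta>st_def: "\<delta>st = \<delta>0 / sqrt (lam_max S)"
    and \<delta>st'_def: "\<delta>st' = \<alpha>1 * sqrt (lam_min S)
                     / (4 * real CARD('d) * \<Lambda>bar * L2 * lam_max S)"
    and \<theta>1_def: "\<theta>1 = (1 / real CARD('d)) *
        min (1 / (3 * (Jmax / real CARD('d)) * \<delta>st))
          (min (1 / (64 * L0 * cond_num sig * cond_num S))
               (1 / (4 * (Jmax / real CARD('d))^2)))"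
    and nst_def: "nst = (Jmax / real CARD('d) / \<delta>st) powr (4/3)"
    (* test functions *)
    and h0_def: "h0 = (\<lambda>Y. (snorm S (Y - real n *\<^sub>R c))^2)"
    (* delta \<le> min{delta_*, delta'_*(d)}, delta'_* = +infinity if L2 = 0 *)
    and \<delta>_le: "\<delta> \<le> \<delta>st" and \<delta>_le': "L2 \<noteq> 0 \<longrightarrow> \<delta> \<le> \<delta>st'"
    and X_in: "X \<in> tball S n \<delta> c"
    and X_far: "snorm S (X - real n *\<^sub>R c) \<ge> Kst * sqrt (real n * real CARD('d))"
  shows "gen JJ g S n \<delta> c h0 X \<le> - \<alpha>1 * h0 X \<and>
         (real n \<ge> nst \<longrightarrow> (\<forall>\<theta>. 0 < \<theta> \<and> \<theta> \<le> \<theta>1 \<longrightarrow>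
           gen JJ g S n \<delta> c (\<lambda>Y. exp (\<theta> * h0 Y / real n)) X
             \<le> - (1/2) * inverse (real n) * \<alpha>1 * \<theta> * h0 X * exp (\<theta> * h0 X / real n)))"
proof -
  define d where "d = real CARD('d)"
  define N where "N = real n"
  have d1: "d \<ge> 1" unfolding d_def using card_ge_0_finite[of "UNIV :: 'd set"] by simp
  have Nd4: "N \<ge> d^4" using n_ge by (simp add: N_def d_def)
  have Nd: "N \<ge> d"
  proof -
    have "d \<le> d^4" using d1 by (simp add: power_increasing[of 1 4 d, simplified])
    thus ?thesis using Nd4 by linarith
  qed
  have Npos: "N > 0" using Nd d1 by linarith
  have Ssym: "sym_mat S" using S_posdef by (simp add: posdef_def)
  obtain B where B: "eigbasis S B" using eigbasis_exists[OF Ssym] by blast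
  define Sinv where "Sinv = matfun B (\<lambda>e. 1 / (e \<bullet> (S *v e)))"
  have Sinv: "matrix_inv S = Sinv" "S ** Sinv = mat 1"
    using mf_inverse[OF S_posdef B] by (auto simp: Sinv_def)
  have lamSpos: "\<And>e. e \<in> B \<Longrightarrow> e \<bullet> (S *v e) > 0" using posdef_eig_pos[OF S_posdef B] by blast
  have R_eq: "R = matfun B (\<lambda>e. sqrt (1 / (e \<bullet> (S *v e))))"
    unfolding R_def Sinv(1) Sinv_def by (rule psd_sqrt_mf[OF B]) (simp add: lamSpos)
  have Rsym: "sym_mat R" by (simp add: R_eq mf_sym)
  have Rpd: "posdef R" unfolding R_eq by (rule mf_posdef[OF B]) (simp add: lamSpos)
  have RR: "R ** R = Sinv"
  proof -
    have "R ** R = matfun B (\<lambda>e. sqrt (1 / (e \<bullet> (S *v e))) * sqrt (1 / (e \<bullet> (S *v e))))"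
      unfolding R_eq by (rule mf_mult[OF B])
    also have "\<dots> = Sinv" unfolding Sinv_def
      by (rule mf_cong) (simp add: lamSpos less_imp_le)
    finally show ?thesis .
  qed
  have lminS: "lam_min S > 0" by (rule posdef_lam_min_pos[OF S_posdef])
  have lmaxS: "lam_max S \<ge> lam_min S" by (rule lam_min_le_max[OF Ssym])
  have RRv: "\<And>v. R *v (R *v v) = Sinv *v v" by (simp add: matrix_vector_mul_assoc RR)
  have Rdot: "\<And>v w. (R *v v) \<bullet> w = v \<bullet> (R *v w)" by (rule sym_dot[OF Rsym])
  have Rn2: "\<And>v. (norm (R *v v))^2 = v \<bullet> (Sinv *v v)"
    by (simp add: power2_norm_eq_inner Rdot RRv)
  have snorm_eq: "\<And>V. snorm S V = norm (R *v V)"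
    by (simp add: snorm_def Sinv(1) Rn2[symmetric])
  have Rn_le: "\<And>v. (norm (R *v v))^2 \<le> (v \<bullet> v) / lam_min S"
    unfolding Rn2 Sinv_def by (rule eb_inv_bounds(2)[OF S_posdef B])
  have Rn_ge: "\<And>v. (v \<bullet> v) / lam_max S \<le> (norm (R *v v))^2"
    unfolding Rn2 Sinv_def by (rule eb_inv_bounds(1)[OF S_posdef B])
  have sigsym: "sym_mat sig" by (simp add: sig_def sig_sym)
  have sig_q: "\<And>v. v \<bullet> (sig *v v) = (\<Sum>J\<in>JJ. g J c * (J \<bullet> v)^2)"
    by (simp add: sig_def sig_quad[OF JJ_fin])
  obtain \<epsilon>0 where \<epsilon>0: "\<epsilon>0 > 0" "\<forall>J\<in>JJ. g J c > 0 \<and> (\<forall>x\<in>cball c \<delta>0. g J x \<ge> \<epsilon>0 * g J c)"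
    using G3 by blast
  have gcpos: "\<And>J. J \<in> JJ \<Longrightarrow> g J c > 0" using \<epsilon>0 by blast
  have sig_pd: "posdef sig"
    unfolding posdef_def
  proof (intro conjI sigsym allI impI)
    fix v :: "real^'d" assume v: "v \<noteq> 0"
    then obtain j where j: "v $ j \<noteq> 0" by (auto simp: vec_eq_iff)
    obtain k :: "real^'d \<Rightarrow> nat" where k: "axis j 1 = (\<Sum>J\<in>JJ. real (k J) *\<^sub>R J)" using G4 by blast
    have "v $ j = axis j 1 \<bullet> v" by (simp add: inner_axis')
    also have "\<dots> = (\<Sum>J\<in>JJ. real (k J) * (J \<bullet> v))" by (simp add: k inner_sum_left)
    finally have "(\<Sum>J\<in>JJ. real (k J) * (J \<bullet> v)) \<noteq> 0" using j by simp
    then obtain J0 where J0: "J0 \<in> JJ" "J0 \<bullet> v \<noteq> 0" by (metis (no_types, lifting) mult_zero_right sum.neutral)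
    have "0 < g J0 c * (J0 \<bullet> v)^2" using gcpos[OF J0(1)] J0(2) by simp
    also have "\<dots> \<le> (\<Sum>J\<in>JJ. g J c * (J \<bullet> v)^2)"
      using JJ_fin J0(1) g_nonneg by (intro member_le_sum) auto
    finally show "v \<bullet> (sig *v v) > 0" by (simp add: sig_q)
  qed
  define sS' where "sS' = sS"
  have sS_R: "\<And>v. v \<bullet> (sS *v v) = (R *v v) \<bullet> (sig *v (R *v v))"
    by (simp add: sS_def matrix_vector_mul_assoc[symmetric] Rdot[symmetric])
  have sSsym: "sym_mat sS"
    using Rsym sigsym by (simp add: sS_def sym_mat_def matrix_transpose_mul matrix_mul_assoc)
  have sS_q: "\<And>v. v \<bullet> (sS *v v) = (\<Sum>J\<in>JJ. g J c * ((R *v J) \<bullet> v)^2)"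
    by (simp add: sS_R sig_q Rdot)
  have sS_pd: "posdef sS"
    unfolding posdef_def
  proof (intro conjI sSsym allI impI)
    fix v :: "real^'d" assume v: "v \<noteq> 0"
    have "v \<bullet> (R *v v) > 0" using Rpd v by (simp add: posdef_def)
    hence "R *v v \<noteq> 0" by auto
    thus "v \<bullet> (sS *v v) > 0" using sig_pd by (simp add: sS_R posdef_def)
  qed
  have \<alpha>1pos: "\<alpha>1 > 0" using posdef_lam_min_pos[OF sS_pd] by (simp add: \<alpha>1_def)
  have tr_sig: "trace sig = (\<Sum>J\<in>JJ. g J c * (J \<bullet> J))" by (simp add: sig_def trace_sig[OF JJ_fin])
  have tr_sS: "trace sS = (\<Sum>J\<in>JJ. g J c * ((R *v J) \<bullet> (R *v J)))"
  proof -
    have "trace sS = (\<Sum>i\<in>UNIV. axis i 1 \<bullet> (sS *v axis i 1))"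
      by (simp add: trace_col inner_axis')
    also have "\<dots> = (\<Sum>i\<in>UNIV. \<Sum>J\<in>JJ. g J c * ((R *v J) $ i)^2)"
      by (simp add: sS_q inner_axis)
    also have "\<dots> = (\<Sum>J\<in>JJ. g J c * (\<Sum>i\<in>UNIV. ((R *v J) $ i)^2))"
      by (subst sum.swap) (simp add: sum_distrib_left)
    also have "\<dots> = (\<Sum>J\<in>JJ. g J c * ((R *v J) \<bullet> (R *v J)))"
      by (simp add: inner_vec_def power2_eq_square)
    finally show ?thesis .
  qed
  have lminsig: "lam_min sig > 0" by (rule posdef_lam_min_pos[OF sig_pd])
  have lmaxsig: "lam_max sig \<ge> lam_min sig" by (rule lam_min_le_max[OF sigsym])
  have lmax_sS: "lam_max sS \<le> lam_max sig / lam_min S"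
  proof -
    obtain v where v: "v \<noteq> 0" "sS *v v = lam_max sS *\<^sub>R v"
      using lam_in(2)[OF sSsym] by (auto simp: real_eigenvalues_def)
    have vv: "v \<bullet> v > 0" using v by simp
    have "lam_max sS * (v \<bullet> v) = v \<bullet> (sS *v v)" using v by simp
    also have "\<dots> \<le> lam_max sig * ((R *v v) \<bullet> (R *v v))" unfolding sS_R by (rule rayleigh(2)[OF sigsym])
    also have "\<dots> \<le> lam_max sig * ((v \<bullet> v) / lam_min S)"
      using Rn_le[of v] lminsig lmaxsig by (intro mult_left_mono) (auto simp: power2_norm_eq_inner)
    finally show ?thesis using vv lminS by (simp add: field_simps)
  qed
  have lmin_sS: "lam_min sS \<ge> lam_min sig / lam_max S"
  proof -
    obtain v where v: "v \<noteq> 0" "sS *v v = lam_min sS *\<^sub>R v"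
      using lam_in(1)[OF sSsym] by (auto simp: real_eigenvalues_def)
    have vv: "v \<bullet> v > 0" using v by simp
    have "lam_min sig * ((v \<bullet> v) / lam_max S) \<le> lam_min sig * ((R *v v) \<bullet> (R *v v))"
      using Rn_ge[of v] lminsig by (intro mult_left_mono) (auto simp: power2_norm_eq_inner)
    also have "\<dots> \<le> v \<bullet> (sS *v v)" unfolding sS_R by (rule rayleigh(1)[OF sigsym])
    also have "\<dots> = lam_min sS * (v \<bullet> v)" using v by simp
    finally show ?thesis using vv lminS lmaxS by (simp add: field_simps)
  qed
  have JJne: "JJ \<noteq> {}"
  proof
    assume "JJ = {}"
    with G4 have "axis undefined (1::real) = (0::real^'d)" by auto
    thus False by (simp add: axis_eq_0_iff)
  qed
  have c_in: "c \<in> cball c \<delta>0" using \<delta>0_pos by simp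
  have gcont: "continuous_on (cball c \<delta>0) (g J)" if J: "J \<in> JJ" for J
    using G2_1 J by (intro has_derivative_continuous_on[where f'="\<lambda>x h. Dg J x \<bullet> h"]) auto
  have L0b: "g J y \<le> L0 * g J c" if J: "J \<in> JJ" and y: "y \<in> cball c \<delta>0" for J y
  proof -
    have "continuous_on (cball c \<delta>0) (\<lambda>x. g J x / g J c)"
      using gcont[OF J] gcpos[OF J] by (intro continuous_intros) auto
    hence "compact ((\<lambda>x. g J x / g J c) ` cball c \<delta>0)"
      by (intro compact_continuous_image) auto
    hence bdd: "bdd_above ((\<lambda>x. g J x / g J c) ` cball c \<delta>0)"
      by (intro bounded_imp_bdd_above compact_imp_bounded)
    have "g J y / g J c \<le> Sup ((\<lambda>x. g J x / g J c) ` cball c \<delta>0)"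
      using y bdd by (intro cSup_upper) auto
    also have "\<dots> \<le> L0" unfolding L0_def using JJ_fin J by (intro Max_ge) auto
    finally show ?thesis using gcpos[OF J] by (simp add: divide_le_eq)
  qed
  have L0ge1: "L0 \<ge> 1"
  proof -
    obtain J where "J \<in> JJ" using JJne by blast
    from L0b[OF this c_in] gcpos[OF this] show ?thesis by simp
  qed
  have L2b: "onorm (\<lambda>h. Hg J y *v h) \<le> L2 * g J c" if J: "J \<in> JJ" and y: "y \<in> cball c \<delta>0" for J y
  proof -
    define F where "F x = (\<Sum>i\<in>UNIV. \<Sum>j\<in>UNIV. \<bar>Hg J x $ i $ j\<bar>) / g J c" for x
    have "continuous_on (cball c \<delta>0) F"
      unfolding F_def using G2_3 J
      using gcpos[OF J] by (intro continuous_intros continuous_on_component) auto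
    hence "compact (F ` cball c \<delta>0)" by (intro compact_continuous_image) auto
    hence "bdd_above (F ` cball c \<delta>0)" by (intro bounded_imp_bdd_above compact_imp_bounded)
    then obtain M where M: "\<And>x. x \<in> cball c \<delta>0 \<Longrightarrow> F x \<le> M" unfolding bdd_above_def by blast
    have "\<And>x. x \<in> cball c \<delta>0 \<Longrightarrow> onorm (\<lambda>h. Hg J x *v h) / g J c \<le> M"
    proof -
      fix x assume x: "x \<in> cball c \<delta>0"
      have "onorm (\<lambda>h. Hg J x *v h) / g J c \<le> F x"
        unfolding F_def using gcpos[OF J]
        by (intro divide_right_mono onorm_le_matrix_component_sum) auto
      also have "\<dots> \<le> M" by (rule M[OF x])
      finally show "onorm (\<lambda>h. Hg J x *v h) / g J c \<le> M" .
    qed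
    hence bdd: "bdd_above ((\<lambda>x. onorm (\<lambda>h. Hg J x *v h) / g J c) ` cball c \<delta>0)"
      unfolding bdd_above_def by (intro exI[of _ M]) blast
    have "onorm (\<lambda>h. Hg J y *v h) / g J c \<le> Sup ((\<lambda>x. onorm (\<lambda>h. Hg J x *v h) / g J c) ` cball c \<delta>0)"
      using y bdd by (intro cSup_upper) auto
    also have "\<dots> \<le> L2" unfolding L2_def using JJ_fin J by (intro Max_ge) auto
    finally show ?thesis using gcpos[OF J] by (simp add: divide_le_eq)
  qed
  have L2nn: "L2 \<ge> 0"
  proof -
    obtain J where J: "J \<in> JJ" using JJne by blast
    have "0 \<le> onorm (\<lambda>h. Hg J c *v h)" by (intro onorm_pos_le) simp
    also have "\<dots> \<le> L2 * g J c" by (rule L2b[OF J c_in])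
    finally show ?thesis using gcpos[OF J] by (simp add: zero_le_mult_iff)
  qed
  have Dg_at: "(g J has_derivative (\<lambda>h. Dg J c \<bullet> h)) (at c)" if J: "J \<in> JJ" for J
  proof -
    have "(g J has_derivative (\<lambda>h. Dg J c \<bullet> h)) (at c within cball c \<delta>0)" using G2_1 J c_in by simp
    hence "(g J has_derivative (\<lambda>h. Dg J c \<bullet> h)) (at c within ball c \<delta>0)"
      by (rule has_derivative_subset) (rule ball_subset_cball)
    thus ?thesis using at_within_open[of c "ball c \<delta>0"] \<delta>0_pos by simp
  qed
  have drift_eq: "drift JJ g = (\<lambda>x. \<Sum>J\<in>JJ. g J x *\<^sub>R J)" by (simp add: drift_def[abs_def])
  have "(drift JJ g has_derivative (\<lambda>h. \<Sum>J\<in>JJ. (Dg J c \<bullet> h) *\<^sub>R J)) (at c)"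
    unfolding drift_eq
  proof (rule has_derivative_sum)
    fix J assume J: "J \<in> JJ"
    show "((\<lambda>x. g J x *\<^sub>R J) has_derivative (\<lambda>h. (Dg J c \<bullet> h) *\<^sub>R J)) (at c)"
      using has_derivative_scaleR[OF Dg_at[OF J] has_derivative_const[of J]] by simp
  qed
  hence eqf: "(\<lambda>h. A *v h) = (\<lambda>h. \<Sum>J\<in>JJ. (Dg J c \<bullet> h) *\<^sub>R J)"
    by (rule has_derivative_unique[OF A_deriv])
  have A_eq: "\<And>h. A *v h = (\<Sum>J\<in>JJ. (Dg J c \<bullet> h) *\<^sub>R J)"
    using fun_cong[OF eqf] by simp
  have F0: "(\<Sum>J\<in>JJ. g J c *\<^sub>R J) = 0" using G0 by (simp add: drift_def)
  have tay: "\<bar>g J y - g J c - Dg J c \<bullet> (y - c)\<bar> \<le> L2 * g J c / 2 * (norm (y - c))^2"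
    if J: "J \<in> JJ" and y: "y \<in> cball c \<delta>0" for J y
  proof -
    have hb: "\<forall>x\<in>cball c \<delta>0. onorm (\<lambda>h. Hg J x *v h) \<le> L2 * g J c" using L2b[OF J] by blast
    have a1: "\<forall>x\<in>cball c \<delta>0. (g J has_derivative (\<lambda>h. Dg J x \<bullet> h)) (at x within cball c \<delta>0)"
      using G2_1 J by blast
    have a2: "\<forall>x\<in>cball c \<delta>0. (Dg J has_derivative (\<lambda>h. Hg J x *v h)) (at x within cball c \<delta>0)"
      using G2_2 J by blast
    show ?thesis by (rule taylor2[OF a1 a2 hb y])
  qed
  define Y where "Y = X - N *\<^sub>R c"
  define Z where "Z = R *v Y"
  define W where "W = R *v Z"
  define x where "x = inverse N *\<^sub>R X"
  have h0_eq: "\<And>V. h0 V = (norm (R *v (V - N *\<^sub>R c)))^2" by (simp add: h0_def snorm_eq N_def)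
  have h0X: "h0 X = Z \<bullet> Z" by (simp add: h0_eq Z_def Y_def power2_norm_eq_inner)
  have h0J: "h0 (X + J) = h0 X + (2 * (W \<bullet> J) + (R *v J) \<bullet> (R *v J))" for J
  proof -
    have "X + J - N *\<^sub>R c = Y + J" by (simp add: Y_def)
    hence "R *v (X + J - N *\<^sub>R c) = Z + R *v J"
      unfolding Z_def by (metis matrix_vector_right_distrib)
    hence "h0 (X+J) = (Z + R *v J) \<bullet> (Z + R *v J)" by (simp add: h0_eq power2_norm_eq_inner)
    also have "\<dots> = Z \<bullet> Z + 2 * (Z \<bullet> (R *v J)) + (R *v J) \<bullet> (R *v J)"
      by (simp add: inner_add_left inner_add_right inner_commute[of "R *v J" Z])
    also have "Z \<bullet> (R *v J) = W \<bullet> J" by (simp add: W_def Rdot)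
    finally show ?thesis using h0X by simp
  qed
  have nZ: "norm Z = snorm S (X - real n *\<^sub>R c)" by (simp add: snorm_eq Z_def Y_def N_def)
  have ZZ: "Z \<bullet> Z = (norm Z)^2" by (simp add: power2_norm_eq_inner)
  have Zle: "norm Z \<le> N * \<delta>" using X_in by (simp add: tball_def nZ N_def)
  have "0 \<le> N * \<delta>" using Zle norm_ge_zero[of Z] by linarith
  hence \<delta>nn: "\<delta> \<ge> 0" using Npos by (simp add: zero_le_mult_iff)
  have Yb: "Y \<bullet> Y \<le> lam_max S * (Z \<bullet> Z)"
    using Rn_ge[of Y] lminS lmaxS by (simp add: Z_def power2_norm_eq_inner field_simps)
  have nY: "norm Y \<le> sqrt (lam_max S) * norm Z"
  proof -
    have "norm Y = sqrt (Y \<bullet> Y)" by (simp add: norm_eq_sqrt_inner)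
    also have "\<dots> \<le> sqrt (lam_max S * (Z \<bullet> Z))" by (rule real_sqrt_le_mono[OF Yb])
    also have "\<dots> = sqrt (lam_max S) * norm Z" by (simp add: real_sqrt_mult norm_eq_sqrt_inner)
    finally show ?thesis .
  qed
  have xc: "x - c = inverse N *\<^sub>R Y" using Npos by (simp add: x_def Y_def scaleR_diff_right)
  have xin: "x \<in> cball c \<delta>0"
  proof -
    have lmpos: "sqrt (lam_max S) > 0" using lminS lmaxS by simp
    have "dist c x = norm (x - c)" by (simp add: dist_norm norm_minus_commute)
    also have "\<dots> = norm Y / N" using Npos by (simp add: xc divide_inverse_commute)
    also have "\<dots> \<le> sqrt (lam_max S) * norm Z / N" using nY Npos by (simp add: divide_right_mono)
    also have "\<dots> \<le> sqrt (lam_max S) * (N * \<delta>) / N"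
      using Zle Npos lmpos by (intro divide_right_mono mult_left_mono) auto
    also have "\<dots> = sqrt (lam_max S) * \<delta>" using Npos by simp
    also have "\<dots> \<le> sqrt (lam_max S) * \<delta>st" using \<delta>_le lmpos by simp
    also have "\<dots> = \<delta>0" using lmpos by (simp add: \<delta>st_def)
    finally show ?thesis by simp
  qed
  have trsSnn: "trace sS \<ge> 0" unfolding tr_sS using g_nonneg by (intro sum_nonneg) simp
  have Kst2: "Kst^2 = 2 * L0 * trace sS / (d * \<alpha>1)"
    unfolding Kst_def d_def[symmetric] using L0ge1 trsSnn \<alpha>1pos d1 by (simp add: zero_le_divide_iff)
  have Kstnn: "Kst \<ge> 0" unfolding Kst_def using L0ge1 trsSnn \<alpha>1pos d1 by (simp add: d_def[symmetric])
  have B2key: "N * L0 * trace sS \<le> \<alpha>1 * (Z \<bullet> Z) / 2"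
  proof -
    have "Kst * sqrt (N * d) \<le> norm Z" using X_far by (simp add: nZ N_def d_def)
    hence "(Kst * sqrt (N * d))^2 \<le> (norm Z)^2"
      using Kstnn Npos d1 by (intro power_mono) auto
    hence "Kst^2 * (N * d) \<le> Z \<bullet> Z" using Npos d1 by (simp add: power_mult_distrib ZZ)
    hence "2 * L0 * trace sS / (d * \<alpha>1) * (N * d) \<le> Z \<bullet> Z" by (simp add: Kst2)
    moreover have "2 * L0 * trace sS / (d * \<alpha>1) * (N * d) = 2 * (N * L0 * trace sS) / \<alpha>1"
      using d1 \<alpha>1pos by (simp add: field_simps)
    ultimately have "2 * (N * L0 * trace sS) / \<alpha>1 \<le> Z \<bullet> Z" by simp
    thus ?thesis using \<alpha>1pos by (simp add: field_simps)
  qed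
  define a where "a J = W \<bullet> J" for J
  define b where "b J = (R *v J) \<bullet> (R *v J)" for J
  define r where "r J = g J x - g J c - Dg J c \<bullet> (x - c)" for J
  define full where "full = N * (\<Sum>J\<in>JJ. g J x * (2 * a J + b J))"
  have SW: "S *v W = Y"
    by (simp add: W_def Z_def RRv matrix_vector_mul_assoc RR Sinv(2))
  have lyap: "2 * (W \<bullet> (A *v Y)) = - (W \<bullet> (sig *v W))"
  proof -
    have "(A ** S + S ** transpose A + sig) *v W = 0" using S_lyap by simp
    hence "(A ** S) *v W + (S ** transpose A) *v W + sig *v W = 0"
      by (simp add: matrix_vector_mult_add_rdistrib)
    hence e: "W \<bullet> ((A ** S) *v W) + W \<bullet> ((S ** transpose A) *v W) + W \<bullet> (sig *v W) = 0"
      by (metis inner_add_right inner_zero_right)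
    have e1: "W \<bullet> ((A ** S) *v W) = W \<bullet> (A *v Y)"
      by (simp add: matrix_vector_mul_assoc[symmetric] SW)
    have "W \<bullet> ((S ** transpose A) *v W) = W \<bullet> (S *v (transpose A *v W))"
      by (simp only: matrix_vector_mul_assoc)
    also have "\<dots> = (S *v W) \<bullet> (transpose A *v W)" by (simp add: sym_dot[OF Ssym])
    also have "\<dots> = (W v* A) \<bullet> Y" by (simp add: SW inner_commute)
    also have "\<dots> = W \<bullet> (A *v Y)" by (rule dot_lmul_matrix)
    finally show ?thesis using e e1 by linarith
  qed
  have split: "(\<Sum>J\<in>JJ. g J x * a J) = inverse N * (W \<bullet> (A *v Y)) + (\<Sum>J\<in>JJ. r J * a J)"
  proof -
    have "(\<Sum>J\<in>JJ. g J x * a J) = (\<Sum>J\<in>JJ. g J c * a J) + (\<Sum>J\<in>JJ. (Dg J c \<bullet> (x - c)) * a J)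
        + (\<Sum>J\<in>JJ. r J * a J)"
      by (simp add: r_def sum.distrib[symmetric] algebra_simps)
    moreover have "(\<Sum>J\<in>JJ. g J c * a J) = 0"
    proof -
      have "(\<Sum>J\<in>JJ. g J c * a J) = W \<bullet> (\<Sum>J\<in>JJ. g J c *\<^sub>R J)" by (simp add: a_def inner_sum_right)
      thus ?thesis by (simp add: F0)
    qed
    moreover have "(\<Sum>J\<in>JJ. (Dg J c \<bullet> (x - c)) * a J) = inverse N * (W \<bullet> (A *v Y))"
    proof -
      have "(\<Sum>J\<in>JJ. (Dg J c \<bullet> (x - c)) * a J) = W \<bullet> (A *v (x - c))"
        by (simp add: a_def A_eq inner_sum_right)
      also have "\<dots> = inverse N * (W \<bullet> (A *v Y))" by (simp add: xc matrix_vector_mult_scaleR)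
      finally show ?thesis .
    qed
    ultimately show ?thesis by simp
  qed
  have sigW: "W \<bullet> (sig *v W) \<ge> 2 * \<alpha>1 * (Z \<bullet> Z)"
  proof -
    have "W \<bullet> (sig *v W) = Z \<bullet> (sS *v Z)" by (simp add: sS_R W_def)
    moreover have "lam_min sS * (Z \<bullet> Z) \<le> Z \<bullet> (sS *v Z)" by (rule rayleigh(1)[OF sSsym])
    ultimately show ?thesis by (simp add: \<alpha>1_def)
  qed
  have bnn: "\<And>J. b J \<ge> 0" by (simp add: b_def)
  have B2: "N * (\<Sum>J\<in>JJ. g J x * b J) \<le> \<alpha>1 * (Z \<bullet> Z) / 2"
  proof -
    have "(\<Sum>J\<in>JJ. g J x * b J) \<le> (\<Sum>J\<in>JJ. L0 * g J c * b J)"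
      using L0b xin bnn by (intro sum_mono mult_right_mono) auto
    also have "\<dots> = L0 * trace sS" by (simp add: tr_sS b_def sum_distrib_left mult_ac)
    finally have "N * (\<Sum>J\<in>JJ. g J x * b J) \<le> N * (L0 * trace sS)" using Npos by simp
    thus ?thesis using B2key by (simp add: mult_ac)
  qed
  have lminSsq: "sqrt (lam_min S) > 0" using lminS by simp
  have KB3: "L2 * lam_max S * \<delta> * trace sig \<le> \<alpha>1 / 4 * sqrt (lam_min S)"
  proof (cases "L2 = 0")
    case True then show ?thesis using \<alpha>1pos lminSsq by simp
  next
    case False
    hence L2p: "L2 > 0" using L2nn by simp
    have trsig: "trace sig = d * \<Lambda>bar" using d1 by (simp add: \<Lambda>bar_def d_def)
    have Lbnn: "\<Lambda>bar \<ge> 0" unfolding \<Lambda>bar_def tr_sig d_def[symmetric] using g_nonneg d1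
      by (intro divide_nonneg_pos sum_nonneg) auto
    show ?thesis
    proof (cases "\<Lambda>bar = 0")
      case True then show ?thesis using trsig \<alpha>1pos lminSsq by simp
    next
      case False
      hence D: "4 * d * \<Lambda>bar * L2 * lam_max S > 0" using Lbnn L2p d1 lminS lmaxS by simp
      have "\<delta> \<le> \<alpha>1 * sqrt (lam_min S) / (4 * d * \<Lambda>bar * L2 * lam_max S)"
        using \<delta>_le' False L2p by (simp add: \<delta>st'_def d_def)
      hence "\<delta> * (4 * d * \<Lambda>bar * L2 * lam_max S) \<le> \<alpha>1 * sqrt (lam_min S)"
        using D by (simp add: le_divide_eq)
      thus ?thesis unfolding trsig by (simp add: algebra_simps)
    qed
  qed
  have Rn_J: "norm (R *v J) \<le> norm J / sqrt (lam_min S)" for J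
  proof -
    have "(norm (R *v J))^2 \<le> (norm J)^2 / lam_min S" using Rn_le[of J] by (simp add: power2_norm_eq_inner)
    hence "norm (R *v J) \<le> sqrt ((norm J)^2 / lam_min S)" by (rule real_le_rsqrt)
    thus ?thesis by (simp add: real_sqrt_divide)
  qed
  have nxc: "(norm (x - c))^2 \<le> lam_max S * (Z \<bullet> Z) / N^2"
  proof -
    have "(norm (x - c))^2 = (Y \<bullet> Y) / N^2" using Npos
      by (simp add: xc power2_norm_eq_inner[symmetric] power2_eq_square field_simps)
    thus ?thesis using Yb Npos by (simp add: divide_right_mono)
  qed
  define C where "C = L2 * lam_max S * (Z \<bullet> Z) * norm Z / (2 * N^2 * sqrt (lam_min S))"
  have ra: "\<bar>r J * a J\<bar> \<le> C * (g J c * (J \<bullet> J))" if J: "J \<in> JJ" for J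
  proof -
    have gc0: "g J c \<ge> 0" using gcpos[OF J] by simp
    have r1: "\<bar>r J\<bar> \<le> L2 * g J c / 2 * (lam_max S * (Z \<bullet> Z) / N^2)"
    proof -
      have "\<bar>r J\<bar> \<le> L2 * g J c / 2 * (norm (x - c))^2" unfolding r_def by (rule tay[OF J xin])
      also have "\<dots> \<le> L2 * g J c / 2 * (lam_max S * (Z \<bullet> Z) / N^2)"
        using nxc L2nn gc0 by (intro mult_left_mono) auto
      finally show ?thesis .
    qed
    have a1: "\<bar>a J\<bar> \<le> norm Z * (J \<bullet> J) / sqrt (lam_min S)"
    proof -
      have "a J = Z \<bullet> (R *v J)" by (simp add: a_def W_def Rdot)
      hence "\<bar>a J\<bar> \<le> norm Z * norm (R *v J)" by (simp add: Cauchy_Schwarz_ineq2)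
      also have "\<dots> \<le> norm Z * (norm J / sqrt (lam_min S))" by (intro mult_left_mono Rn_J) simp
      also have "\<dots> \<le> norm Z * ((J \<bullet> J) / sqrt (lam_min S))"
        using lattice_norm[of J] JJ_lat J lminSsq
        by (intro mult_left_mono divide_right_mono) (auto simp: power2_norm_eq_inner)
      finally show ?thesis by simp
    qed
    have "\<bar>r J * a J\<bar> = \<bar>r J\<bar> * \<bar>a J\<bar>" by (simp add: abs_mult)
    also have "\<dots> \<le> (L2 * g J c / 2 * (lam_max S * (Z \<bullet> Z) / N^2)) * (norm Z * (J \<bullet> J) / sqrt (lam_min S))"
      using r1 a1 by (intro mult_mono) auto
    also have "\<dots> = C * (g J c * (J \<bullet> J))" by (simp add: C_def field_simps)
    finally show ?thesis .
  qed
  have Cnn: "C \<ge> 0" unfolding C_def using L2nn lminS lmaxS Npos by (intro divide_nonneg_pos mult_nonneg_nonneg) auto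
  have B3: "\<bar>2 * N * (\<Sum>J\<in>JJ. r J * a J)\<bar> \<le> \<alpha>1 * (Z \<bullet> Z) / 4"
  proof -
    have "\<bar>\<Sum>J\<in>JJ. r J * a J\<bar> \<le> (\<Sum>J\<in>JJ. \<bar>r J * a J\<bar>)" by (rule sum_abs)
    also have "\<dots> \<le> (\<Sum>J\<in>JJ. C * (g J c * (J \<bullet> J)))" by (intro sum_mono ra)
    also have "\<dots> = C * trace sig" by (simp add: tr_sig sum_distrib_left)
    finally have s1: "\<bar>\<Sum>J\<in>JJ. r J * a J\<bar> \<le> C * trace sig" .
    have trnn: "trace sig \<ge> 0" unfolding tr_sig using g_nonneg by (intro sum_nonneg) simp
    have e: "2 * N * (C * trace sig) = (Z \<bullet> Z) * (L2 * lam_max S * (norm Z / N) * trace sig) / sqrt (lam_min S)"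
      using Npos lminSsq by (simp add: C_def field_simps power2_eq_square)
    have "L2 * lam_max S * (norm Z / N) * trace sig \<le> L2 * lam_max S * \<delta> * trace sig"
    proof -
      have "norm Z / N \<le> \<delta>" using Zle Npos by (simp add: divide_le_eq mult.commute)
      thus ?thesis using L2nn lminS lmaxS trnn
        by (intro mult_right_mono mult_left_mono) auto
    qed
    also have "\<dots> \<le> \<alpha>1 / 4 * sqrt (lam_min S)" by (rule KB3)
    finally have "(Z \<bullet> Z) * (L2 * lam_max S * (norm Z / N) * trace sig) / sqrt (lam_min S)
        \<le> (Z \<bullet> Z) * (\<alpha>1 / 4 * sqrt (lam_min S)) / sqrt (lam_min S)"
      using lminSsq by (intro divide_right_mono mult_left_mono) auto
    also have "\<dots> = \<alpha>1 * (Z \<bullet> Z) / 4" using lminSsq by simp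
    finally have "2 * N * (C * trace sig) \<le> \<alpha>1 * (Z \<bullet> Z) / 4" using e by simp
    moreover have "\<bar>2 * N * (\<Sum>J\<in>JJ. r J * a J)\<bar> \<le> 2 * N * (C * trace sig)"
      using s1 Npos by (simp add: abs_mult)
    ultimately show ?thesis by linarith
  qed
  have full_eq: "full = 2 * (W \<bullet> (A *v Y)) + 2 * N * (\<Sum>J\<in>JJ. r J * a J) + N * (\<Sum>J\<in>JJ. g J x * b J)"
  proof -
    have "full = 2 * N * (\<Sum>J\<in>JJ. g J x * a J) + N * (\<Sum>J\<in>JJ. g J x * b J)"
      by (simp add: full_def algebra_simps sum.distrib sum_distrib_left)
    also have "\<dots> = 2 * N * (inverse N * (W \<bullet> (A *v Y)) + (\<Sum>J\<in>JJ. r J * a J)) + N * (\<Sum>J\<in>JJ. g J x * b J)"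
      by (simp only: split)
    also have "\<dots> = 2 * (W \<bullet> (A *v Y)) + 2 * N * (\<Sum>J\<in>JJ. r J * a J) + N * (\<Sum>J\<in>JJ. g J x * b J)"
      using Npos by (simp add: distrib_left)
    finally show ?thesis .
  qed
  have full_le: "full \<le> - (5/4) * \<alpha>1 * (Z \<bullet> Z)"
    using full_eq lyap sigW B2 B3 by (simp add: abs_le_iff)
  have restr: "gen JJ g S n \<delta> c h X \<le> N * (\<Sum>J\<in>JJ. g J x * (h (X + J) - h X))"
    if hm: "\<And>V. snorm S (V - real n *\<^sub>R c) > real n * \<delta> \<Longrightarrow> h V \<ge> h X" for h
  proof -
    have "g_restr g S n \<delta> c J X * (h (X + J) - h X) \<le> g J x * (h (X + J) - h X)" if J: "J \<in> JJ" for J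
    proof (cases "X + J \<in> tball S n \<delta> c")
      case True
      then show ?thesis using X_in by (simp add: g_restr_def x_def N_def)
    next
      case False
      have "lattice_pt (X + J)" using X_in JJ_lat J by (intro lattice_add) (auto simp: tball_def)
      hence "snorm S (X + J - real n *\<^sub>R c) > real n * \<delta>" using False by (auto simp: tball_def)
      hence "h (X + J) \<ge> h X" by (rule hm)
      hence "0 \<le> g J x * (h (X + J) - h X)" using g_nonneg by simp
      then show ?thesis using False by (simp add: g_restr_def)
    qed
    hence "(\<Sum>J\<in>JJ. g_restr g S n \<delta> c J X * (h (X + J) - h X)) \<le> (\<Sum>J\<in>JJ. g J x * (h (X + J) - h X))"
      by (intro sum_mono)
    thus ?thesis unfolding gen_def N_def using Npos by (intro mult_left_mono) (auto simp: N_def)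
  qed
  have hmono: "h0 V \<ge> h0 X" if "snorm S (V - real n *\<^sub>R c) > real n * \<delta>" for V
  proof -
    have "norm Z \<le> snorm S (V - real n *\<^sub>R c)" using that Zle by (simp add: N_def)
    hence "(norm Z)^2 \<le> (snorm S (V - real n *\<^sub>R c))^2" by (intro power_mono) auto
    thus ?thesis by (simp add: h0_def nZ)
  qed
  have gen0: "gen JJ g S n \<delta> c h0 X \<le> full"
  proof -
    have "gen JJ g S n \<delta> c h0 X \<le> N * (\<Sum>J\<in>JJ. g J x * (h0 (X + J) - h0 X))" by (rule restr[of h0, OF hmono])
    also have "\<dots> = full" by (simp add: full_def h0J a_def b_def)
    finally show ?thesis .
  qed
  have claim1: "gen JJ g S n \<delta> c h0 X \<le> - \<alpha>1 * h0 X"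
  proof -
    have "Z \<bullet> Z \<ge> 0" by simp
    hence "- (5/4) * \<alpha>1 * (Z \<bullet> Z) \<le> - \<alpha>1 * (Z \<bullet> Z)" using \<alpha>1pos by (simp add: mult_le_cancel_right)
    thus ?thesis using gen0 full_le unfolding h0X by linarith
  qed
  have Jb: "norm (R *v J) \<le> Jmax" if J: "J \<in> JJ" for J
    unfolding Jmax_def using JJ_fin J by (intro Max_ge) auto
  have Jmaxnn: "Jmax \<ge> 0"
  proof -
    obtain J where "J \<in> JJ" using JJne by blast
    from Jb[OF this] show ?thesis using norm_ge_zero[of "R *v J"] by linarith
  qed
  have lmaxSpos: "lam_max S > 0" using lminS lmaxS by linarith
  have \<delta>stpos: "\<delta>st > 0" using \<delta>0_pos lmaxSpos by (simp add: \<delta>st_def)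
  have condsig: "cond_num sig > 0" using lminsig lmaxsig by (simp add: cond_num_def)
  have condS: "cond_num S > 0" using lminS lmaxS by (simp add: cond_num_def)
  have rho: "lam_max sS \<le> cond_num sig * cond_num S * lam_min sS"
  proof -
    have "cond_num sig * cond_num S * (lam_min sig / lam_max S) \<le> cond_num sig * cond_num S * lam_min sS"
      using lmin_sS condsig condS by (intro mult_left_mono) auto
    moreover have "cond_num sig * cond_num S * (lam_min sig / lam_max S) = lam_max sig / lam_min S"
      using lminsig lminS lmaxSpos by (simp add: cond_num_def field_simps)
    ultimately show ?thesis using lmax_sS by linarith
  qed
  have claim2: "gen JJ g S n \<delta> c (\<lambda>Y. exp (\<theta> * h0 Y / real n)) X
             \<le> - (1/2) * inverse (real n) * \<alpha>1 * \<theta> * h0 X * exp (\<theta> * h0 X / real n)"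
    if th: "0 < \<theta>" "\<theta> \<le> \<theta>1" for \<theta>
  proof -
    define A1 where "A1 = 1 / (3 * (Jmax / d) * \<delta>st)"
    define A2 where "A2 = 1 / (64 * L0 * cond_num sig * cond_num S)"
    define A3 where "A3 = 1 / (4 * (Jmax / d)^2)"
    have m0: "\<theta> \<le> (1/d) * min A1 (min A2 A3)"
      using th(2) unfolding \<theta>1_def A1_def A2_def A3_def d_def by simp
    have d0: "1/d \<ge> 0" using d1 by simp
    have m1: "\<theta> \<le> (1/d) * (1 / (3 * (Jmax / d) * \<delta>st))"
      using m0 mult_left_mono[OF min.cobounded1[of A1 "min A2 A3"] d0] unfolding A1_def by linarith
    have m2: "\<theta> \<le> (1/d) * (1 / (64 * L0 * cond_num sig * cond_num S))"
      using m0 mult_left_mono[OF order.trans[OF min.cobounded2[of A1 "min A2 A3"] min.cobounded1[of A2 A3]] d0]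
      unfolding A2_def by linarith
    have m3: "\<theta> \<le> (1/d) * (1 / (4 * (Jmax / d)^2))"
      using m0 mult_left_mono[OF order.trans[OF min.cobounded2[of A1 "min A2 A3"] min.cobounded2[of A2 A3]] d0]
      unfolding A3_def by linarith
    have tha: "\<theta> * Jmax * \<delta>st \<le> 1/3"
    proof (cases "Jmax = 0")
      case True then show ?thesis by simp
    next
      case False
      hence Jp: "Jmax > 0" using Jmaxnn by simp
      have "(1/d) * (1 / (3 * (Jmax / d) * \<delta>st)) = 1 / (3 * Jmax * \<delta>st)" using d1 by (simp add: field_simps)
      hence "\<theta> \<le> 1 / (3 * Jmax * \<delta>st)" using m1 d1 by simp
      thus ?thesis using Jp \<delta>stpos by (simp add: le_divide_eq field_simps)
    qed
    have thc: "\<theta> * Jmax^2 \<le> d / 4"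
    proof (cases "Jmax = 0")
      case True then show ?thesis using d1 by simp
    next
      case False
      hence Jp: "Jmax > 0" using Jmaxnn by simp
      have "(1/d) * (1 / (4 * (Jmax / d)^2)) = d / (4 * Jmax^2)" using d1 by (simp add: field_simps power2_eq_square)
      hence "\<theta> \<le> d / (4 * Jmax^2)" using m3 d1 by simp
      thus ?thesis using Jp by (simp add: le_divide_eq field_simps)
    qed
    have thb: "\<theta> * (64 * L0 * cond_num sig * cond_num S) \<le> 1"
    proof -
      have D: "64 * L0 * cond_num sig * cond_num S > 0" using L0ge1 condsig condS by simp
      have "(1/d) * (1 / (64 * L0 * cond_num sig * cond_num S)) \<le> 1 / (64 * L0 * cond_num sig * cond_num S)"
        using d1 D by (simp add: divide_le_eq_1 field_simps)
      hence "\<theta> \<le> 1 / (64 * L0 * cond_num sig * cond_num S)" using m2 by linarith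
      thus ?thesis using D by (simp add: le_divide_eq mult.commute)
    qed
    have key8: "8 * \<theta> * L0 * lam_max sS \<le> \<alpha>1 / 4"
    proof -
      have "64 * \<theta> * L0 * lam_max sS \<le> 64 * \<theta> * L0 * (cond_num sig * cond_num S * lam_min sS)"
        using rho th L0ge1 by (intro mult_left_mono) auto
      also have "\<dots> = (\<theta> * (64 * L0 * cond_num sig * cond_num S)) * lam_min sS" by (simp add: mult_ac)
      also have "\<dots> \<le> 1 * lam_min sS"
        using thb posdef_lam_min_pos[OF sS_pd] by (intro mult_right_mono) auto
      finally show ?thesis by (simp add: \<alpha>1_def)
    qed
    define E where "E = exp (\<theta> * h0 X / N)"
    define \<Delta> where "\<Delta> J = 2 * a J + b J" for J
    define u where "u J = \<theta> * \<Delta> J / N" for J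
    have Epos: "E > 0" by (simp add: E_def)
    have hJe: "exp (\<theta> * h0 (X + J) / real n) = E * exp (u J)" for J
    proof -
      have "h0 (X + J) = h0 X + \<Delta> J" by (simp only: h0J \<Delta>_def a_def b_def)
      hence "\<theta> * h0 (X + J) / N = \<theta> * h0 X / N + u J" by (simp add: u_def add_divide_distrib distrib_left)
      thus ?thesis by (simp add: E_def N_def[symmetric] exp_add)
    qed
    have aZ: "\<bar>a J\<bar> \<le> norm Z * Jmax" if J: "J \<in> JJ" for J
    proof -
      have "a J = Z \<bullet> (R *v J)" by (simp add: a_def W_def Rdot)
      hence "\<bar>a J\<bar> \<le> norm Z * norm (R *v J)" by (simp add: Cauchy_Schwarz_ineq2)
      also have "\<dots> \<le> norm Z * Jmax" by (intro mult_left_mono Jb J) simp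
      finally show ?thesis .
    qed
    have bJ: "b J \<le> Jmax^2" if J: "J \<in> JJ" for J
    proof -
      have "b J = (norm (R *v J))^2" by (simp add: b_def power2_norm_eq_inner)
      also have "\<dots> \<le> Jmax^2" by (intro power_mono Jb J) simp
      finally show ?thesis .
    qed
    have ub: "\<bar>u J\<bar> \<le> 1" if J: "J \<in> JJ" for J
    proof -
      have "\<bar>\<Delta> J\<bar> \<le> 2 * (norm Z * Jmax) + Jmax^2"
        using aZ[OF J] bJ[OF J] bnn[of J] by (simp add: \<Delta>_def abs_le_iff)
      hence "\<bar>u J\<bar> \<le> \<theta> * (2 * (norm Z * Jmax) + Jmax^2) / N"
        using th Npos by (simp add: u_def abs_mult divide_right_mono mult_left_mono)
      also have "\<dots> = 2 * (\<theta> * Jmax * (norm Z / N)) + \<theta> * Jmax^2 / N"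
        using Npos by (simp add: field_simps)
      also have "\<dots> \<le> 2 * (1/3) + 1/4"
      proof -
        have "norm Z / N \<le> \<delta>st" using Zle Npos \<delta>_le by (simp add: divide_le_eq mult.commute) (metis mult_left_mono \<delta>_le less_imp_le Npos order_trans mult.commute)
        hence "\<theta> * Jmax * (norm Z / N) \<le> \<theta> * Jmax * \<delta>st"
          using th Jmaxnn by (intro mult_left_mono) auto
        hence A1: "\<theta> * Jmax * (norm Z / N) \<le> 1/3" using tha by linarith
        have "\<theta> * Jmax^2 / N \<le> (d/4) / N" using divide_right_mono[OF thc, of N] Npos by simp
        also have "\<dots> \<le> 1/4" using Nd Npos d1 by (simp add: divide_le_eq)
        finally show ?thesis using A1 by linarith
      qed
      finally show ?thesis by simp
    qed
    have sqb: "\<theta> * (\<Sum>J\<in>JJ. g J x * (\<Delta> J)^2) \<le> \<alpha>1 * (Z \<bullet> Z) / 2"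
    proof -
      have "(\<Sum>J\<in>JJ. g J x * (\<Delta> J)^2) \<le> (\<Sum>J\<in>JJ. 8 * (g J x * (a J)^2) + 2 * (g J x * (b J)^2))"
      proof (intro sum_mono)
        fix J assume J: "J \<in> JJ"
        have "(\<Delta> J)^2 \<le> 8 * (a J)^2 + 2 * (b J)^2"
          unfolding \<Delta>_def by (rule sq_ineq)
        hence "g J x * (\<Delta> J)^2 \<le> g J x * (8 * (a J)^2 + 2 * (b J)^2)"
          using g_nonneg[rule_format, of J x] by (rule mult_left_mono)
        thus "g J x * (\<Delta> J)^2 \<le> 8 * (g J x * (a J)^2) + 2 * (g J x * (b J)^2)"
          by (simp add: distrib_left mult.left_commute)
      qed
      also have "\<dots> = 8 * (\<Sum>J\<in>JJ. g J x * (a J)^2) + 2 * (\<Sum>J\<in>JJ. g J x * (b J)^2)"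
        by (simp add: sum.distrib sum_distrib_left)
      also have "(\<Sum>J\<in>JJ. g J x * (a J)^2) \<le> L0 * lam_max sS * (Z \<bullet> Z)"
      proof -
        have "(\<Sum>J\<in>JJ. g J x * (a J)^2) \<le> (\<Sum>J\<in>JJ. L0 * (g J c * (a J)^2))"
          using L0b xin by (intro sum_mono) (simp add: mult_right_mono mult.assoc[symmetric])
        also have "\<dots> = L0 * (Z \<bullet> (sS *v Z))"
        proof -
          have aR: "a J = (R *v J) \<bullet> Z" for J
          proof -
            have "a J = (R *v Z) \<bullet> J" by (simp add: a_def W_def)
            also have "\<dots> = Z \<bullet> (R *v J)" by (rule Rdot)
            also have "\<dots> = (R *v J) \<bullet> Z" by (rule inner_commute)
            finally show ?thesis .
          qed
          show ?thesis by (simp add: sS_q sum_distrib_left aR)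
        qed
        also have "\<dots> \<le> L0 * (lam_max sS * (Z \<bullet> Z))"
          using L0ge1 rayleigh(2)[OF sSsym, of Z] by (intro mult_left_mono) auto
        finally show ?thesis by (simp add: mult_ac)
      qed
      also have "(\<Sum>J\<in>JJ. g J x * (b J)^2) \<le> Jmax^2 * (L0 * trace sS)"
      proof -
        have "(\<Sum>J\<in>JJ. g J x * (b J)^2) \<le> (\<Sum>J\<in>JJ. Jmax^2 * (g J x * b J))"
        proof (intro sum_mono)
          fix J assume J: "J \<in> JJ"
          have "(b J)^2 \<le> Jmax^2 * b J" using bJ[OF J] bnn[of J]
            by (simp add: power2_eq_square mult_right_mono)
          thus "g J x * (b J)^2 \<le> Jmax^2 * (g J x * b J)"
            using g_nonneg[rule_format, of J x] by (simp add: mult_left_mono mult.left_commute)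
        qed
        also have "\<dots> = Jmax^2 * (\<Sum>J\<in>JJ. g J x * b J)" by (simp add: sum_distrib_left)
        also have "\<dots> \<le> Jmax^2 * (L0 * trace sS)"
        proof -
          have "(\<Sum>J\<in>JJ. g J x * b J) \<le> (\<Sum>J\<in>JJ. L0 * g J c * b J)"
            using L0b xin bnn by (intro sum_mono mult_right_mono) auto
          also have "\<dots> = L0 * trace sS" by (simp add: tr_sS b_def sum_distrib_left mult_ac)
          finally show ?thesis by (intro mult_left_mono) auto
        qed
        finally show ?thesis .
      qed
      finally have s: "(\<Sum>J\<in>JJ. g J x * (\<Delta> J)^2) \<le> 8 * (L0 * lam_max sS * (Z \<bullet> Z)) + 2 * (Jmax^2 * (L0 * trace sS))"
        by simp
      have "\<theta> * (\<Sum>J\<in>JJ. g J x * (\<Delta> J)^2) \<le> \<theta> * (8 * (L0 * lam_max sS * (Z \<bullet> Z)) + 2 * (Jmax^2 * (L0 * trace sS)))"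
        using s th by (intro mult_left_mono) auto
      also have "\<dots> = (8 * \<theta> * L0 * lam_max sS) * (Z \<bullet> Z) + 2 * (\<theta> * Jmax^2) * (L0 * trace sS)"
        by (simp add: algebra_simps)
      also have "\<dots> \<le> (\<alpha>1/4) * (Z \<bullet> Z) + 2 * (N/4) * (L0 * trace sS)"
      proof (intro add_mono mult_right_mono mult_left_mono)
        show "8 * \<theta> * L0 * lam_max sS \<le> \<alpha>1 / 4" by (rule key8)
        show "\<theta> * Jmax^2 \<le> N / 4" using thc Nd by linarith
      qed (use L0ge1 trsSnn in auto)
      also have "\<dots> \<le> \<alpha>1 * (Z \<bullet> Z) / 2" using B2key by simp
      finally show ?thesis .
    qed
    have full2: "full = N * (\<Sum>J\<in>JJ. g J x * \<Delta> J)" by (simp add: full_def \<Delta>_def)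
    have "gen JJ g S n \<delta> c (\<lambda>Y. exp (\<theta> * h0 Y / real n)) X
        \<le> N * (\<Sum>J\<in>JJ. g J x * (exp (\<theta> * h0 (X + J) / real n) - exp (\<theta> * h0 X / real n)))"
    proof (rule restr)
      fix V assume "real n * \<delta> < snorm S (V - real n *\<^sub>R c)"
      hence "h0 V \<ge> h0 X" by (rule hmono)
      thus "exp (\<theta> * h0 X / real n) \<le> exp (\<theta> * h0 V / real n)"
        using th Npos by (simp add: N_def divide_right_mono mult_left_mono)
    qed
    also have "\<dots> = N * (\<Sum>J\<in>JJ. g J x * (E * exp (u J) - E))"
    proof -
      have E': "exp (\<theta> * h0 X / real n) = E" by (simp add: E_def N_def)
      show ?thesis by (simp only: hJe E')
    qed
    also have "\<dots> = N * E * (\<Sum>J\<in>JJ. g J x * (exp (u J) - 1))"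
      by (simp add: sum_distrib_left algebra_simps)
    also have "\<dots> \<le> N * E * (\<Sum>J\<in>JJ. g J x * (u J + 3/2 * (u J)^2))"
      using Npos Epos g_nonneg exp_quad[OF ub]
      by (intro mult_left_mono sum_mono) auto
    also have "\<dots> = E * (\<theta> / N * full + 3/2 * (\<theta> / N) * (\<theta> * (\<Sum>J\<in>JJ. g J x * (\<Delta> J)^2)))"
    proof -
      have t: "g J x * (u J + 3/2 * (u J)^2) = (\<theta>/N) * (g J x * \<Delta> J) + 3/2 * (\<theta>/N)^2 * (g J x * (\<Delta> J)^2)" for J
        by (simp add: u_def power2_eq_square algebra_simps)
      have "(\<Sum>J\<in>JJ. g J x * (u J + 3/2 * (u J)^2))
          = (\<theta>/N) * (\<Sum>J\<in>JJ. g J x * \<Delta> J) + 3/2 * (\<theta>/N)^2 * (\<Sum>J\<in>JJ. g J x * (\<Delta> J)^2)"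
        by (subst sum.cong[OF refl t]) (simp_all only: sum.distrib sum_distrib_left)
      moreover have "(\<Sum>J\<in>JJ. g J x * \<Delta> J) = full / N" using Npos by (simp add: full2)
      ultimately show ?thesis using Npos by (simp add: field_simps power2_eq_square)
    qed
    also have "\<dots> \<le> E * (\<theta> / N * (- (5/4) * \<alpha>1 * (Z \<bullet> Z)) + 3/2 * (\<theta> / N) * (\<alpha>1 * (Z \<bullet> Z) / 2))"
      using full_le sqb Epos th Npos
      by (intro mult_left_mono add_mono mult_left_mono) auto
    also have "\<dots> = - (1/2) * inverse (real n) * \<alpha>1 * \<theta> * h0 X * exp (\<theta> * h0 X / real n)"
      by (simp add: E_def N_def h0X field_simps)
    finally show ?thesis .
  qed
  show ?thesis using claim1 claim2 by blast
qed

end
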